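(* Let $$d=s^6-(3+3i)s^5+3is^4+(4-4i)s^3+3s^2+(3+3i)s+i,\qquad d'=s^6-(3-3i)s^5-3is^4+(4+4i)s^3+3s^2+(3-3i)s-i$$ (so $d'(s)=\overline{d(\overline s)}$), and $$y=-\frac{(1+i)(s^2-1)(s^2+2is+1)(s^2-2is+1)^2\,d'}{8s(s^2+i)(s^2-i)^2\,d},\qquad t=\frac{(s^2-1)^2(s^4+6s^2+1)^3}{32s^2(s^4+1)^3}.$$ Then $y(t)$ is a solution of $\mathrm{P}_{\mathrm{VI}}$ with parameters $(\theta_1,\theta_2,\theta_3,\theta_4)=(3/8,3/8,3/8,5/8)$.
   Context: $\mathrm{P}_{\mathrm{VI}}$ is the equation $$\frac{d^2y}{dt^2}=\frac12\Big(\frac1y+\frac1{y-1}+\frac1{y-t}\Big)\Big(\frac{dy}{dt}\Big)^2-\Big(\frac1t+\frac1{t-1}+\frac1{y-t}\Big)\frac{dy}{dt}+\frac{y(y-1)(y-t)}{t^2(t-1)^2}\Big(\alpha+\beta\frac{t}{y^2}+\gamma\frac{t-1}{(y-1)^2}+\delta\frac{t(t-1)}{(y-t)^2}\Big),$$ with $\alpha=(\theta_4-1)^2/2$, $\beta=-\theta_1^2/2$, $\gamma=\theta_3^2/2$, $\delta=(1-\theta_2^2)/2$. When $y,t$ are given as rational functions of a parameter on a curve, derivatives with respect to $t$ are computed via the chain rule. Here $i=\sqrt{-1}$. *)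

theory Defs
  imports "HOL-Complex_Analysis.Complex_Analysis"
begin

definition PVI_rhs :: "complex \<Rightarrow> complex \<Rightarrow> complex \<Rightarrow> complex \<Rightarrow>
    complex \<Rightarrow> complex \<Rightarrow> complex \<Rightarrow> complex" where
  "PVI_rhs th1 th2 th3 th4 t y y1 =
     (let \<alpha> = (th4 - 1)^2 / 2; \<beta> = - (th1^2) / 2; \<gamma> = th3^2 / 2; \<delta> = (1 - th2^2) / 2 in
      (1/2) * (1/y + 1/(y - 1) + 1/(y - t)) * y1^2
      - (1/t + 1/(t - 1) + 1/(y - t)) * y1
      + y * (y - 1) * (y - t) / (t^2 * (t - 1)^2)
        * (\<alpha> + \<beta> * t / y^2 + \<gamma> * (t - 1) / (y - 1)^2 + \<delta> * t * (t - 1) / (y - t)^2))"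

text \<open>A curve (s \<mapsto> (t(s), y(s))) solves PVI at parameter value s, derivatives with
  respect to t computed by the chain rule: dy/dt = y'(s)/t'(s),
  d^2y/dt^2 = (d/ds (y'/t'))(s) / t'(s).\<close>
definition solves_PVI_at :: "complex \<Rightarrow> complex \<Rightarrow> complex \<Rightarrow> complex \<Rightarrow>
    (complex \<Rightarrow> complex) \<Rightarrow> (complex \<Rightarrow> complex) \<Rightarrow> complex \<Rightarrow> bool" where
  "solves_PVI_at th1 th2 th3 th4 tf yf s \<longleftrightarrow>
     deriv (\<lambda>u. deriv yf u / deriv tf u) s / deriv tf s
       = PVI_rhs th1 th2 th3 th4 (tf s) (yf s) (deriv yf s / deriv tf s)"

definition dpol :: "complex \<Rightarrow> complex" where
  "dpol s = s^6 - (3 + 3*\<i>) * s^5 + 3*\<i> * s^4 + (4 - 4*\<i>) * s^3 + 3 * s^2 + (3 + 3*\<i>) * s + \<i>"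

definition dpol' :: "complex \<Rightarrow> complex" where
  "dpol' s = s^6 - (3 - 3*\<i>) * s^5 - 3*\<i> * s^4 + (4 + 4*\<i>) * s^3 + 3 * s^2 + (3 - 3*\<i>) * s - \<i>"

definition yfun :: "complex \<Rightarrow> complex" where
  "yfun s = - ((1 + \<i>) * (s^2 - 1) * (s^2 + 2*\<i> * s + 1) * (s^2 - 2*\<i> * s + 1)^2 * dpol' s)
            / (8 * s * (s^2 + \<i>) * (s^2 - \<i>)^2 * dpol s)"

definition tfun :: "complex \<Rightarrow> complex" where
  "tfun s = (s^2 - 1)^2 * (s^4 + 6 * s^2 + 1)^3 / (32 * s^2 * (s^4 + 1)^3)"

end

theory Submission
  imports Defs
begin


type_synonym gp = "(int \<times> int) list"

fun gc :: "int \<times> int \<Rightarrow> complex" where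
  "gc (a, b) = of_int a + of_int b * \<i>"

fun gadd :: "int \<times> int \<Rightarrow> int \<times> int \<Rightarrow> int \<times> int" where
  "gadd (a, b) (c, d) = (a + c, b + d)"

fun gmul :: "int \<times> int \<Rightarrow> int \<times> int \<Rightarrow> int \<times> int" where
  "gmul (a, b) (c, d) = (a * c - b * d, a * d + b * c)"

fun ev :: "gp \<Rightarrow> complex \<Rightarrow> complex" where
  "ev [] x = 0"
| "ev (c # cs) x = gc c + x * ev cs x"

fun padd :: "gp \<Rightarrow> gp \<Rightarrow> gp" where
  "padd [] q = q"
| "padd p [] = p"
| "padd (a # p) (b # q) = gadd a b # padd p q"

definition psc :: "int \<times> int \<Rightarrow> gp \<Rightarrow> gp" where
  "psc a q = map (gmul a) q"

fun pmul :: "gp \<Rightarrow> gp \<Rightarrow> gp" where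
  "pmul [] q = []"
| "pmul (a # p) q = padd (psc a q) ((0, 0) # pmul p q)"

definition pneg :: "gp \<Rightarrow> gp" where
  "pneg p = map (\<lambda>(a, b). (- a, - b)) p"

fun pder :: "gp \<Rightarrow> gp" where
  "pder [] = []"
| "pder (c # cs) = padd cs ((0, 0) # pder cs)"

fun ppow :: "gp \<Rightarrow> nat \<Rightarrow> gp" where
  "ppow p 0 = [(1, 0)]"
| "ppow p (Suc n) = pmul p (ppow p n)"

definition pz :: "gp \<Rightarrow> bool" where
  "pz p = list_all (\<lambda>c. c = (0, 0)) p"

lemma gc_gadd: "gc (gadd a b) = gc a + gc b"
  by (cases a; cases b) (simp add: algebra_simps)

lemma gc_gmul: "gc (gmul a b) = gc a * gc b"
  by (cases a; cases b) (simp add: algebra_simps)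

lemma ev_padd: "ev (padd p q) x = ev p x + ev q x"
  by (induction p q rule: padd.induct) (simp_all add: gc_gadd algebra_simps)

lemma ev_psc: "ev (psc a q) x = gc a * ev q x"
  by (induction q) (simp_all add: psc_def gc_gmul algebra_simps)

lemma ev_pmul: "ev (pmul p q) x = ev p x * ev q x"
  by (induction p) (simp_all add: ev_padd ev_psc algebra_simps)

lemma ev_pneg: "ev (pneg p) x = - ev p x"
  by (induction p) (auto simp: pneg_def algebra_simps)

lemma ev_ppow: "ev (ppow p n) x = ev p x ^ n"
  by (induction n) (simp_all add: ev_pmul)

lemma ev_pz: "pz p \<Longrightarrow> ev p x = 0"
  by (induction p) (auto simp: pz_def)

lemma ev_deriv: "(ev p has_field_derivative ev (pder p) x) (at x)"
proof (induction p arbitrary: x)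
  case Nil
  then show ?case by simp
next
  case (Cons c cs)
  have "((\<lambda>x. gc c + x * ev cs x) has_field_derivative (0 + (1 * ev cs x + x * ev (pder cs) x))) (at x)"
    using DERIV_add[OF DERIV_const[of "gc c"] DERIV_mult[OF DERIV_ident Cons]] by (simp add: mult.commute)
  then show ?case by (simp add: ev_padd algebra_simps)
qed

lemma ev_cont: "continuous_on UNIV (ev p)"
  by (rule continuous_on_subset[OF _ subset_UNIV], rule DERIV_continuous_on[OF ev_deriv])

lemma pz_eq: "pz (padd A (pneg B)) \<Longrightarrow> ev A x = ev B x"
  using ev_pz[of "padd A (pneg B)" x] by (simp add: ev_padd ev_pneg)

fun monl :: "gp list \<Rightarrow> int list \<Rightarrow> complex \<Rightarrow> complex" where
  "monl [] ns x = 1"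
| "monl (L # Ls) [] x = 1"
| "monl (L # Ls) (n # ns) x = power_int (ev L x) n * monl Ls ns x"

fun amonl :: "gp list \<Rightarrow> nat list \<Rightarrow> gp" where
  "amonl [] ns = [(1, 0)]"
| "amonl (L # Ls) [] = [(1, 0)]"
| "amonl (L # Ls) (n # ns) = pmul (ppow L n) (amonl Ls ns)"

fun amv :: "gp list \<Rightarrow> nat list \<Rightarrow> complex \<Rightarrow> complex" where
  "amv [] ns x = 1"
| "amv (L # Ls) [] x = 1"
| "amv (L # Ls) (n # ns) x = ev L x ^ n * amv Ls ns x"

fun addv :: "int list \<Rightarrow> int list \<Rightarrow> int list" where
  "addv [] b = b"
| "addv a [] = a"
| "addv (a # as) (b # bs) = (a + b) # addv as bs"

definition negv :: "int list \<Rightarrow> int list" where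
  "negv a = map uminus a"

definition allnz :: "gp list \<Rightarrow> complex \<Rightarrow> bool" where
  "allnz Ls x \<longleftrightarrow> (\<forall>L\<in>set Ls. ev L x \<noteq> 0)"

definition rep :: "gp list \<Rightarrow> complex \<Rightarrow> complex \<Rightarrow> gp \<Rightarrow> int list \<Rightarrow> complex" where
  "rep Ls x k C e = k * ev C x * monl Ls e x"

lemma monl_Nil[simp]: "monl Ls [] x = 1"
  by (cases Ls) auto

lemma ev_amonl_amv: "ev (amonl Ls ns) x = amv Ls ns x"
  by (induction Ls ns rule: amonl.induct) (simp_all add: ev_pmul ev_ppow)

lemma ev_amonl: "ev (amonl Ls ns) x = monl Ls (map int ns) x"
  by (induction Ls ns rule: amonl.induct) (simp_all add: ev_pmul ev_ppow power_int_of_nat)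

lemma monl_add: "allnz Ls x \<Longrightarrow> monl Ls (addv a b) x = monl Ls a x * monl Ls b x"
proof (induction Ls arbitrary: a b)
  case Nil
  then show ?case by simp
next
  case (Cons L Ls)
  then have nz: "ev L x \<noteq> 0" and r: "allnz Ls x" by (auto simp: allnz_def)
  show ?case
  proof (cases a)
    case Nil
    then show ?thesis by simp
  next
    case (Cons a1 as)
    show ?thesis
    proof (cases b)
      case Nil
      then show ?thesis using Cons by simp
    next
      case (Cons b1 bs)
      then show ?thesis using \<open>a = a1 # as\<close> Cons.IH[OF r] nz
        by (simp add: power_int_add algebra_simps)
    qed
  qed
qed

lemma monl_neg: "monl Ls (negv a) x = inverse (monl Ls a x)"
proof (induction Ls arbitrary: a)
  case Nil
  then show ?case by simp
next
  case (Cons L Ls)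
  then show ?case by (cases a) (simp_all add: negv_def power_int_minus)
qed

lemma monl_nz: "allnz Ls x \<Longrightarrow> monl Ls a x \<noteq> 0"
proof (induction Ls arbitrary: a)
  case Nil
  then show ?case by simp
next
  case (Cons L Ls)
  then show ?case by (cases a) (auto simp: allnz_def)
qed

lemma amonl_nz: "allnz Ls x \<Longrightarrow> ev (amonl Ls ns) x \<noteq> 0"
  by (simp add: ev_amonl monl_nz)

lemma amonl_comp_nz:
  "ev (amonl Ls ns) x \<noteq> 0 \<Longrightarrow> i < length Ls \<Longrightarrow> i < length ns \<Longrightarrow> 0 < ns ! i \<Longrightarrow> ev (Ls ! i) x \<noteq> 0"
proof (induction Ls arbitrary: ns i)
  case Nil
  then show ?case by simp
next
  case (Cons L Ls)
  then show ?case
    by (cases ns; cases i) (auto simp: ev_pmul ev_ppow)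
qed

lemma allnz_amonl_iff: "ev (amonl Ls (replicate (length Ls) 1)) x \<noteq> 0 \<longleftrightarrow> allnz Ls x"
  by (induction Ls) (auto simp: allnz_def ev_pmul ev_ppow)

lemma rep_quot:
  assumes "allnz Ls x" "dn \<noteq> 0" "k = of_int cn / of_int dn"
    "e = addv (map int p) (negv (map int q))"
  shows "ev (pmul (psc (cn, 0) C) (amonl Ls p)) x / ev (pmul [(dn, 0)] (amonl Ls q)) x = rep Ls x k C e"
proof -
  have q: "monl Ls (map int q) x \<noteq> 0" by (rule monl_nz[OF assms(1)])
  have "ev (pmul (psc (cn, 0) C) (amonl Ls p)) x = of_int cn * ev C x * monl Ls (map int p) x"
    by (simp only: ev_pmul ev_psc ev_amonl) simp
  moreover have "ev (pmul [(dn, 0)] (amonl Ls q)) x = of_int dn * monl Ls (map int q) x"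
    by (simp only: ev_pmul ev_amonl) simp
  moreover have "monl Ls e x = monl Ls (map int p) x * inverse (monl Ls (map int q) x)"
    using assms(4) by (simp add: monl_add[OF assms(1)] monl_neg)
  ultimately show ?thesis using assms(2,3) q by (simp add: rep_def field_simps)
qed

lemma rep_mul:
  assumes "allnz Ls x" "pz (padd (pmul C1 C2) (pneg (psc a3 C3)))"
    "k3 = k1 * k2 * gc a3" "e3 = addv e1 e2"
  shows "rep Ls x k1 C1 e1 * rep Ls x k2 C2 e2 = rep Ls x k3 C3 e3"
proof -
  have "ev C1 x * ev C2 x = gc a3 * ev C3 x"
    using pz_eq[OF assms(2), of x] by (simp add: ev_pmul ev_psc)
  then show ?thesis using assms(3,4) by (simp add: rep_def monl_add[OF assms(1)] algebra_simps)
qed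

lemma rep_cmul:
  assumes "k' = c * k"
  shows "c * rep Ls x k C e = rep Ls x k' C e"
  using assms by (simp add: rep_def algebra_simps)

lemma rep_inv:
  assumes "allnz Ls x" "gc c * gc c' = of_int n" "n \<noteq> 0" "k \<noteq> 0"
    "k' = 1 / (k * of_int n)" "e' = negv e"
  shows "1 / rep Ls x k [c] e = rep Ls x k' [c'] e'"
proof -
  have "gc c \<noteq> 0" using assms(2,3) by auto
  then show ?thesis using assms monl_nz[OF assms(1), of e]
    by (simp add: rep_def monl_neg field_simps)
qed

lemma rep_add:
  assumes "allnz Ls x"
    "pz (padd (padd (psc a1 (pmul C1 (amonl Ls d1))) (psc a2 (pmul C2 (amonl Ls d2)))) (pneg (psc a3 (pmul C3 (amonl Ls f)))))"
    "e1 = addv m (map int d1)" "e2 = addv m (map int d2)" "e3 = addv m (map int f)"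
    "k1 = K * gc a1" "k2 = K * gc a2" "k3 = K * gc a3"
  shows "rep Ls x k1 C1 e1 + rep Ls x k2 C2 e2 = rep Ls x k3 C3 e3"
proof -
  have h: "gc a1 * (ev C1 x * monl Ls (map int d1) x) + gc a2 * (ev C2 x * monl Ls (map int d2) x)
      = gc a3 * (ev C3 x * monl Ls (map int f) x)"
    using ev_pz[OF assms(2), of x] by (simp add: ev_padd ev_psc ev_pmul ev_pneg ev_amonl)
  have "rep Ls x k1 C1 e1 + rep Ls x k2 C2 e2 = K * monl Ls m x *
     (gc a1 * (ev C1 x * monl Ls (map int d1) x) + gc a2 * (ev C2 x * monl Ls (map int d2) x))"
    using assms(3,4,6,7) by (simp add: rep_def monl_add[OF assms(1)] algebra_simps)
  also have "\<dots> = rep Ls x k3 C3 e3"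
    unfolding h using assms(5,8) by (simp add: rep_def monl_add[OF assms(1)] algebra_simps)
  finally show ?thesis .
qed

lemma rep_sub:
  assumes "allnz Ls x"
    "pz (padd (padd (psc a1 (pmul C1 (amonl Ls d1))) (psc a2 (pmul C2 (amonl Ls d2)))) (pneg (psc a3 (pmul C3 (amonl Ls f)))))"
    "e1 = addv m (map int d1)" "e2 = addv m (map int d2)" "e3 = addv m (map int f)"
    "k1 = K * gc a1" "k2 = - (K * gc a2)" "k3 = K * gc a3"
  shows "rep Ls x k1 C1 e1 - rep Ls x k2 C2 e2 = rep Ls x k3 C3 e3"
proof -
  have "rep Ls x k1 C1 e1 + rep Ls x (- k2) C2 e2 = rep Ls x k3 C3 e3"
    by (rule rep_add[OF assms(1,2,3,4,5,6) _ assms(8)]) (simp add: assms(7))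
  then show ?thesis by (simp add: rep_def)
qed

lemma rep_const: "rep Ls x c [(1, 0)] [] = c"
  by (simp add: rep_def)

lemma monl_zeros: "list_all (\<lambda>n. n = 0) zs \<Longrightarrow> monl Ls zs x = 1"
proof (induction Ls arbitrary: zs)
  case Nil
  then show ?case by simp
next
  case (Cons L Ls)
  then show ?case by (cases zs) auto
qed

lemma const_add: "list_all (\<lambda>n. n = 0) zs \<Longrightarrow> rep Ls x c [(1, 0)] zs + r = q \<Longrightarrow> c + r = q"
  by (simp add: rep_def monl_zeros)

lemma sub_const: "list_all (\<lambda>n. n = 0) zs \<Longrightarrow> r - rep Ls x c [(1, 0)] zs = q \<Longrightarrow> r - c = q"
  by (simp add: rep_def monl_zeros)

lemma div_via: "1 / b = bi \<Longrightarrow> a * bi = r \<Longrightarrow> a / (b::complex) = r"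
  by (simp add: divide_inverse)

lemma pow2_via: "b * b = r \<Longrightarrow> (b::complex) ^ 2 = r"
  by (simp add: power2_eq_square)

lemma quot_deriv_red:
  assumes "ev D x \<noteq> 0" "ev D1 x \<noteq> 0"
    "pz (padd (pmul (padd (pmul (pder N) D) (pneg (pmul N (pder D)))) D1) (pneg (pmul N1 (pmul D D))))"
  shows "((\<lambda>u. ev N u / ev D u) has_field_derivative ev N1 x / ev D1 x) (at x)"
proof -
  have d: "((\<lambda>u. ev N u / ev D u) has_field_derivative
     (ev (pder N) x * ev D x - ev N x * ev (pder D) x) / (ev D x * ev D x)) (at x)"
    by (rule DERIV_divide[OF ev_deriv ev_deriv assms(1)])
  have e: "(ev (pder N) x * ev D x - ev N x * ev (pder D) x) * ev D1 x = ev N1 x * (ev D x * ev D x)"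
    using pz_eq[OF assms(3), of x] by (simp add: ev_pmul ev_padd ev_pneg)
  have "(ev (pder N) x * ev D x - ev N x * ev (pder D) x) / (ev D x * ev D x) = ev N1 x / ev D1 x"
    using e assms(1,2) by (simp add: field_simps)
  then show ?thesis using d by simp
qed

lemma quot_div_red:
  assumes "ev B x \<noteq> 0" "ev Cc x \<noteq> 0" "ev Dd x \<noteq> 0" "ev ZD x \<noteq> 0"
    "pz (padd (pmul (pmul A Dd) ZD) (pneg (pmul ZN (pmul B Cc))))"
  shows "(ev A x / ev B x) / (ev Cc x / ev Dd x) = ev ZN x / ev ZD x"
proof -
  have e: "ev A x * ev Dd x * ev ZD x = ev ZN x * (ev B x * ev Cc x)"
    using pz_eq[OF assms(5), of x] by (simp add: ev_pmul)
  then show ?thesis using assms(1-4) by (simp add: field_simps)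
qed


definition A_s :: gp where "A_s = [(0, 0), (1, 0)]"

definition A_ap :: gp where "A_ap = [(0, 1), (0, 0), (1, 0)]"

definition A_am :: gp where "A_am = [(0, -1), (0, 0), (1, 0)]"

definition A_d :: gp where "A_d = [(0, 1), (3, 3), (3, 0), (4, -4), (0, 3), (-3, -3), (1, 0)]"

definition A_dp :: gp where "A_dp = [(0, -1), (3, -3), (3, 0), (4, 4), (0, -3), (-3, 3), (1, 0)]"

definition A_e1 :: gp where "A_e1 = [(-1, 0), (0, 0), (1, 0)]"

definition A_e2 :: gp where "A_e2 = [(1, 0), (0, 2), (1, 0)]"

definition A_e3 :: gp where "A_e3 = [(1, 0), (0, -2), (1, 0)]"

definition A_u2 :: gp where "A_u2 = [(-1, 0), (-2, 0), (1, 0)]"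

definition A_u3 :: gp where "A_u3 = [(-1, 0), (2, 0), (1, 0)]"

definition A_sq1 :: gp where "A_sq1 = [(1, 0), (0, 0), (1, 0)]"

definition A_u1 :: gp where "A_u1 = [(0, -1), (-3, 3), (3, 0), (-4, -4), (0, -3), (3, -3), (1, 0)]"

definition A_v :: gp where "A_v = [(0, 1), (-3, -3), (3, 0), (-4, 4), (0, 3), (3, 3), (1, 0)]"

definition ATL :: "gp list" where "ATL = [A_s, A_ap, A_am, A_d, A_dp, A_e1, A_e2, A_e3, A_u2, A_u3, A_sq1, A_u1, A_v]"

definition YN :: gp where "YN = pmul (psc (1, 0) [(-1, -1)]) (amonl ATL [0, 0, 0, 0, 1, 1, 1, 2, 0, 0, 0, 0, 0])"

definition YD :: gp where "YD = pmul [(8, 0)] (amonl ATL [1, 1, 2, 1, 0, 0, 0, 0, 0, 0, 0, 0, 0])"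

definition TN :: gp where "TN = pmul (psc (1, 0) [(1, 0)]) (amonl ATL [0, 0, 0, 0, 0, 2, 3, 3, 0, 0, 0, 0, 0])"

definition TD :: gp where "TD = pmul [(32, 0)] (amonl ATL [2, 3, 3, 0, 0, 0, 0, 0, 0, 0, 0, 0, 0])"

definition Y1N :: gp where "Y1N = pmul (psc (1, 0) [(1, 1), (8, 0), (-10, 10), (0, -104), (-53, -53), (272, 0), (-120, 120), (0, 240), (666, 666), (608, 0), (260, -260), (0, 608), (-666, -666), (240, 0), (-120, 120), (0, 272), (53, 53), (-104, 0), (-10, 10), (0, 8), (-1, -1)]) (amonl ATL [0, 0, 0, 0, 0, 0, 0, 1, 1, 0, 0, 0, 0])"

definition Y1D :: gp where "Y1D = pmul [(8, 0)] (amonl ATL [2, 2, 3, 2, 0, 0, 0, 0, 0, 0, 0, 0, 0])"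

definition T1N :: gp where "T1N = pmul (psc (1, 0) [(1, 0)]) (amonl ATL [0, 0, 0, 0, 0, 1, 2, 2, 2, 2, 1, 0, 0])"

definition T1D :: gp where "T1D = pmul [(16, 0)] (amonl ATL [3, 4, 4, 0, 0, 0, 0, 0, 0, 0, 0, 0, 0])"

definition ZN :: gp where "ZN = pmul (psc (2, 0) [(1, 1), (8, 0), (-10, 10), (0, -104), (-53, -53), (272, 0), (-120, 120), (0, 240), (666, 666), (608, 0), (260, -260), (0, 608), (-666, -666), (240, 0), (-120, 120), (0, 272), (53, 53), (-104, 0), (-10, 10), (0, 8), (-1, -1)]) (amonl ATL [1, 2, 1, 0, 0, 0, 0, 0, 0, 0, 0, 0, 0])"

definition ZD :: gp where "ZD = pmul [(1, 0)] (amonl ATL [0, 0, 0, 2, 0, 1, 2, 1, 1, 2, 1, 0, 0])"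

definition Z1N :: gp where "Z1N = pmul (psc (2, 0) [(1, -1), (0, -14), (9, 9), (-336, 0), (-622, 622), (0, -1900), (-8334, -8334), (-11376, 0), (-43979, 43979), (0, 36170), (38989, 38989), (-169344, 0), (48440, -48440), (0, -512144), (219512, 219512), (-360192, 0), (-227342, 227342), (0, 2147012), (1309570, 1309570), (2009952, 0), (-287668, 287668), (0, -1241096), (-287668, -287668), (-2009952, 0), (1309570, -1309570), (0, 2147012), (-227342, -227342), (360192, 0), (219512, -219512), (0, -512144), (48440, 48440), (169344, 0), (38989, -38989), (0, 36170), (-43979, -43979), (11376, 0), (-8334, 8334), (0, -1900), (-622, -622), (336, 0), (9, -9), (0, -14), (1, 1)]) (amonl ATL [0, 1, 0, 0, 0, 0, 0, 0, 0, 0, 0, 0, 0])"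

definition Z1D :: gp where "Z1D = pmul [(1, 0)] (amonl ATL [0, 0, 0, 3, 0, 2, 3, 2, 2, 3, 2, 0, 0])"

definition YM1 :: gp where "YM1 = pmul [(-1, -1)] (amonl ATL [0, 0, 0, 0, 0, 0, 0, 0, 2, 1, 1, 1, 0])"

definition VV :: gp where "VV = pmul [(-8, 0)] (amonl ATL [1, 1, 2, 0, 0, 1, 1, 2, 2, 1, 1, 0, 1])"

lemma ev_A_s: "ev A_s x = x" by (simp add: A_s_def)
lemma ev_A_ap: "ev A_ap x = x^2 + \<i>" by (simp add: A_ap_def power2_eq_square algebra_simps)
lemma ev_A_am: "ev A_am x = x^2 - \<i>" by (simp add: A_am_def power2_eq_square algebra_simps)
lemma ev_A_e1: "ev A_e1 x = x^2 - 1" by (simp add: A_e1_def power2_eq_square algebra_simps)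
lemma ev_A_e2: "ev A_e2 x = x^2 + 2*\<i>*x + 1" by (simp add: A_e2_def power2_eq_square algebra_simps)
lemma ev_A_e3: "ev A_e3 x = x^2 - 2*\<i>*x + 1" by (simp add: A_e3_def power2_eq_square algebra_simps)
lemma ev_A_d: "ev A_d x = dpol x" by (simp add: A_d_def dpol_def eval_nat_numeral algebra_simps)
lemma ev_A_dp: "ev A_dp x = dpol' x" by (simp add: A_dp_def dpol'_def eval_nat_numeral algebra_simps)

lemma yfun_q: "yfun x = ev YN x / ev YD x"
proof -
  have n: "ev YN x = - ((1 + \<i>) * (x^2 - 1) * (x^2 + 2*\<i> * x + 1) * (x^2 - 2*\<i> * x + 1)^2 * dpol' x)"
    unfolding YN_def ev_pmul ev_psc ev_amonl_amv ATL_def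
    by (simp add: ev_A_e1 ev_A_e2 ev_A_e3 ev_A_dp algebra_simps)
  have d: "ev YD x = 8 * x * (x^2 + \<i>) * (x^2 - \<i>)^2 * dpol x"
    unfolding YD_def ev_pmul ev_psc ev_amonl_amv ATL_def
    by (simp add: ev_A_s ev_A_ap ev_A_am ev_A_d algebra_simps)
  show ?thesis unfolding yfun_def n d ..
qed

lemma tfun_q: "tfun x = ev TN x / ev TD x"
proof -
  have f: "x^4 + 6 * x^2 + 1 = (x^2 + 2*\<i>*x + 1) * (x^2 - 2*\<i>*x + 1)"
    by (simp add: algebra_simps power2_eq_square eval_nat_numeral)
  have g: "x^4 + 1 = (x^2 + \<i>) * (x^2 - \<i>)"
    by (simp add: algebra_simps power2_eq_square eval_nat_numeral)
  have n: "ev TN x = (x^2 - 1)^2 * (x^4 + 6 * x^2 + 1)^3"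
    unfolding f TN_def ev_pmul ev_psc ev_amonl_amv ATL_def
    by (simp add: ev_A_e1 ev_A_e2 ev_A_e3 power_mult_distrib)
  have d: "ev TD x = 32 * x^2 * (x^4 + 1)^3"
    unfolding g TD_def ev_pmul ev_psc ev_amonl_amv ATL_def
    by (simp add: ev_A_s ev_A_ap ev_A_am power_mult_distrib)
  show ?thesis unfolding tfun_def n d ..
qed

lemma chkY1: "pz (padd (pmul (padd (pmul (pder YN) YD) (pneg (pmul YN (pder YD)))) Y1D) (pneg (pmul Y1N (pmul YD YD))))"
  by code_simp
lemma chkT1: "pz (padd (pmul (padd (pmul (pder TN) TD) (pneg (pmul TN (pder TD)))) T1D) (pneg (pmul T1N (pmul TD TD))))"
  by code_simp
lemma chkZ: "pz (padd (pmul (pmul Y1N T1D) ZD) (pneg (pmul ZN (pmul Y1D T1N))))"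
  by code_simp
lemma chkZ1: "pz (padd (pmul (padd (pmul (pder ZN) ZD) (pneg (pmul ZN (pder ZD)))) Z1D) (pneg (pmul Z1N (pmul ZD ZD))))"
  by code_simp
lemma chkYM1: "pz (padd (padd YN (pneg YD)) (pneg YM1))"
  by code_simp
lemma chkVV: "pz (padd (padd (pmul YN TD) (pneg (pmul TN YD))) (pneg VV))"
  by code_simp

lemma pvi_expand: "PVI_rhs (3/8) (3/8) (3/8) (5/8) t y z = (1 / 2) * (1 / y + 1 / (y - 1) + 1 / (y - t)) * z ^ 2 - (1 / t + 1 / (t - 1) + 1 / (y - t)) * z + y * (y - 1) * (y - t) / (t ^ 2 * (t - 1) ^ 2) * ((9 / 128) + (- 9 / 128) * t / y ^ 2 + (9 / 128) * (t - 1) / (y - 1) ^ 2 + (55 / 128) * t * (t - 1) / (y - t) ^ 2)"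
proof -
  have a: "((5/8::complex) - 1)^2 / 2 = 9 / 128" by (simp add: power2_eq_square)
  have b: "- ((3/8::complex)^2) / 2 = - 9 / 128" by (simp add: power2_eq_square)
  have c: "(3/8::complex)^2 / 2 = 9 / 128" by (simp add: power2_eq_square)
  have d: "(1 - (3/8::complex)^2) / 2 = 55 / 128" by (simp add: power2_eq_square)
  show ?thesis unfolding PVI_rhs_def Let_def a b c d ..
qed

lemma amonl_part_nz: "ev (pmul C (amonl Ls ns)) x \<noteq> 0 \<Longrightarrow> ev (amonl Ls ns) x \<noteq> 0"
  by (simp add: ev_pmul)

lemma atl_comp: "ev (amonl ATL ns) x \<noteq> 0 \<Longrightarrow> i < 13 \<Longrightarrow> i < length ns \<Longrightarrow> 0 < ns ! i \<Longrightarrow> ev (ATL ! i) x \<noteq> 0"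
  by (rule amonl_comp_nz) (simp_all add: ATL_def)

lemma quot_nz: "allnz ATL x \<Longrightarrow> gc a \<noteq> 0 \<Longrightarrow> ev (pmul [a] (amonl ATL ns)) x \<noteq> 0"
  by (simp add: ev_pmul amonl_nz del: pmul.simps)

theorem mainTheorem13:
  fixes s :: complex
  assumes "s \<noteq> 0" and "s^2 + \<i> \<noteq> 0" and "s^2 - \<i> \<noteq> 0" and "dpol s \<noteq> 0"
    and "deriv tfun s \<noteq> 0"
    and "tfun s \<noteq> 0" and "tfun s \<noteq> 1"
    and "yfun s \<noteq> 0" and "yfun s \<noteq> 1" and "yfun s \<noteq> tfun s"
  shows "solves_PVI_at (3/8) (3/8) (3/8) (5/8) tfun yfun s"
proof -
  have a_s: "ev A_s s \<noteq> 0" using assms(1) by (simp add: ev_A_s)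
  have a_ap: "ev A_ap s \<noteq> 0" using assms(2) by (simp add: ev_A_ap)
  have a_am: "ev A_am s \<noteq> 0" using assms(3) by (simp add: ev_A_am)
  have a_d: "ev A_d s \<noteq> 0" using assms(4) by (simp add: ev_A_d)
  have YDnz: "ev YD s \<noteq> 0"
    unfolding YD_def ev_pmul ev_amonl_amv ATL_def using a_s a_ap a_am a_d by simp
  have TDnz: "ev TD s \<noteq> 0"
    unfolding TD_def ev_pmul ev_amonl_amv ATL_def using a_s a_ap a_am a_d by simp
  have YNnz: "ev YN s \<noteq> 0" using assms(8) YDnz by (simp add: yfun_q)
  have YNa: "ev (amonl ATL [0, 0, 0, 0, 1, 1, 1, 2, 0, 0, 0, 0, 0]) s \<noteq> 0"
    by (rule amonl_part_nz[of "psc (1, 0) [(-1, -1)]"]) (use YNnz in \<open>simp add: YN_def\<close>)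
  have YM1nz: "ev YM1 s \<noteq> 0"
  proof -
    have "ev YN s \<noteq> ev YD s" using assms(9) YDnz by (auto simp: yfun_q)
    moreover have "ev YM1 s = ev YN s - ev YD s"
      using pz_eq[OF chkYM1, of s] by (simp add: ev_padd ev_pneg)
    ultimately show ?thesis by simp
  qed
  have YM1a: "ev (amonl ATL [0, 0, 0, 0, 0, 0, 0, 0, 2, 1, 1, 1, 0]) s \<noteq> 0"
    by (rule amonl_part_nz[of "[(-1, -1)]"]) (use YM1nz in \<open>simp add: YM1_def\<close>)
  have VVnz: "ev VV s \<noteq> 0"
  proof -
    have "ev YN s / ev YD s \<noteq> ev TN s / ev TD s" using assms(10) by (simp add: yfun_q tfun_q)
    then have "ev YN s * ev TD s \<noteq> ev TN s * ev YD s" using YDnz TDnz by (auto simp: field_simps)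
    moreover have "ev VV s = ev YN s * ev TD s - ev TN s * ev YD s"
      using pz_eq[OF chkVV, of s] by (simp add: ev_padd ev_pneg ev_pmul)
    ultimately show ?thesis by simp
  qed
  have VVa: "ev (amonl ATL [1, 1, 2, 0, 0, 1, 1, 2, 2, 1, 1, 0, 1]) s \<noteq> 0"
    by (rule amonl_part_nz[of "[(-8, 0)]"]) (use VVnz in \<open>simp add: VV_def\<close>)
  have a_dp: "ev A_dp s \<noteq> 0" using atl_comp[OF YNa, of 4] by (simp add: ATL_def)
  have a_e1: "ev A_e1 s \<noteq> 0" using atl_comp[OF YNa, of 5] by (simp add: ATL_def)
  have a_e2: "ev A_e2 s \<noteq> 0" using atl_comp[OF YNa, of 6] by (simp add: ATL_def)
  have a_e3: "ev A_e3 s \<noteq> 0" using atl_comp[OF YNa, of 7] by (simp add: ATL_def)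
  have a_u2: "ev A_u2 s \<noteq> 0" using atl_comp[OF YM1a, of 8] by (simp add: ATL_def)
  have a_u3: "ev A_u3 s \<noteq> 0" using atl_comp[OF YM1a, of 9] by (simp add: ATL_def)
  have a_sq1: "ev A_sq1 s \<noteq> 0" using atl_comp[OF YM1a, of 10] by (simp add: ATL_def)
  have a_u1: "ev A_u1 s \<noteq> 0" using atl_comp[OF YM1a, of 11] by (simp add: ATL_def)
  have a_v: "ev A_v s \<noteq> 0" using atl_comp[OF VVa, of 12] by (simp add: ATL_def)
  have nz: "allnz ATL s"
    unfolding allnz_def ATL_def
    using a_s a_ap a_am a_d a_dp a_e1 a_e2 a_e3 a_u2 a_u3 a_sq1 a_u1 a_v by simp
  define S where "S = {u. allnz ATL u}"
  have Sopen: "open S"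
  proof -
    have "S = {u. ev (amonl ATL (replicate (length ATL) 1)) u \<noteq> (\<lambda>_. 0) u}"
      unfolding S_def using allnz_amonl_iff by simp
    then show ?thesis using open_Collect_neq[OF ev_cont continuous_on_const] by simp
  qed
  have sS: "s \<in> S" using nz by (simp add: S_def)
  have Dnz: "ev YD u \<noteq> 0 \<and> ev TD u \<noteq> 0 \<and> ev Y1D u \<noteq> 0 \<and> ev T1D u \<noteq> 0 \<and> ev ZD u \<noteq> 0 \<and> ev Z1D u \<noteq> 0 \<and> ev T1N u \<noteq> 0"
    if "allnz ATL u" for u
    unfolding YD_def TD_def Y1D_def T1D_def ZD_def Z1D_def T1N_def
    using that by (simp add: quot_nz ev_pmul ev_psc amonl_nz del: pmul.simps)
  have yq: "yfun = (\<lambda>u. ev YN u / ev YD u)" by (rule ext) (rule yfun_q)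
  have tq: "tfun = (\<lambda>u. ev TN u / ev TD u)" by (rule ext) (rule tfun_q)
  have dY: "deriv yfun u = ev Y1N u / ev Y1D u" if "allnz ATL u" for u
    unfolding yq using Dnz[OF that] by (intro DERIV_imp_deriv quot_deriv_red[OF _ _ chkY1]) simp_all
  have dT: "deriv tfun u = ev T1N u / ev T1D u" if "allnz ATL u" for u
    unfolding tq using Dnz[OF that] by (intro DERIV_imp_deriv quot_deriv_red[OF _ _ chkT1]) simp_all
  have zq: "deriv yfun u / deriv tfun u = ev ZN u / ev ZD u" if "allnz ATL u" for u
    unfolding dY[OF that] dT[OF that] using Dnz[OF that] by (intro quot_div_red[OF _ _ _ _ chkZ]) simp_all
  have dZ: "deriv (\<lambda>u. deriv yfun u / deriv tfun u) s = ev Z1N s / ev Z1D s"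
  proof -
    have "((\<lambda>u. ev ZN u / ev ZD u) has_field_derivative ev Z1N s / ev Z1D s) (at s)"
      using Dnz[OF nz] by (intro quot_deriv_red[OF _ _ chkZ1]) simp_all
    then have "((\<lambda>u. deriv yfun u / deriv tfun u) has_field_derivative ev Z1N s / ev Z1D s) (at s)"
      by (rule has_field_derivative_transform_within_open[OF _ Sopen sS]) (simp add: S_def zq)
    then show ?thesis by (rule DERIV_imp_deriv)
  qed
  have rY: "ev YN s / ev YD s = rep ATL s (1 / 8) [(-1, -1)] [-1, -1, -2, -1, 1, 1, 1, 2, 0, 0, 0, 0, 0]"
    unfolding YN_def YD_def by (rule rep_quot[OF nz]) (simp_all add: negv_def)
  have rT: "ev TN s / ev TD s = rep ATL s (1 / 32) [(1, 0)] [-2, -3, -3, 0, 0, 2, 3, 3, 0, 0, 0, 0, 0]"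
    unfolding TN_def TD_def by (rule rep_quot[OF nz]) (simp_all add: negv_def)
  have rT1: "ev T1N s / ev T1D s = rep ATL s (1 / 16) [(1, 0)] [-3, -4, -4, 0, 0, 1, 2, 2, 2, 2, 1, 0, 0]"
    unfolding T1N_def T1D_def by (rule rep_quot[OF nz]) (simp_all add: negv_def)
  have rZ: "ev ZN s / ev ZD s = rep ATL s (2) [(1, 1), (8, 0), (-10, 10), (0, -104), (-53, -53), (272, 0), (-120, 120), (0, 240), (666, 666), (608, 0), (260, -260), (0, 608), (-666, -666), (240, 0), (-120, 120), (0, 272), (53, 53), (-104, 0), (-10, 10), (0, 8), (-1, -1)] [1, 2, 1, -2, 0, -1, -2, -1, -1, -2, -1, 0, 0]"
    unfolding ZN_def ZD_def by (rule rep_quot[OF nz]) (simp_all add: negv_def)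
  have rZ1: "ev Z1N s / ev Z1D s = rep ATL s (2) [(1, -1), (0, -14), (9, 9), (-336, 0), (-622, 622), (0, -1900), (-8334, -8334), (-11376, 0), (-43979, 43979), (0, 36170), (38989, 38989), (-169344, 0), (48440, -48440), (0, -512144), (219512, 219512), (-360192, 0), (-227342, 227342), (0, 2147012), (1309570, 1309570), (2009952, 0), (-287668, 287668), (0, -1241096), (-287668, -287668), (-2009952, 0), (1309570, -1309570), (0, 2147012), (-227342, -227342), (360192, 0), (219512, -219512), (0, -512144), (48440, 48440), (169344, 0), (38989, -38989), (0, 36170), (-43979, -43979), (11376, 0), (-8334, 8334), (0, -1900), (-622, -622), (336, 0), (9, -9), (0, -14), (1, 1)] [0, 1, 0, -3, 0, -2, -3, -2, -2, -3, -2, 0, 0]"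
    unfolding Z1N_def Z1D_def by (rule rep_quot[OF nz]) (simp_all add: negv_def)
  have ey: "yfun s = rep ATL s (1 / 8) [(-1, -1)] [-1, -1, -2, -1, 1, 1, 1, 2, 0, 0, 0, 0, 0]" using rY by (simp add: yfun_q)
  have et: "tfun s = rep ATL s (1 / 32) [(1, 0)] [-2, -3, -3, 0, 0, 2, 3, 3, 0, 0, 0, 0, 0]" using rT by (simp add: tfun_q)
  have ez: "deriv yfun s / deriv tfun s = rep ATL s (2) [(1, 1), (8, 0), (-10, 10), (0, -104), (-53, -53), (272, 0), (-120, 120), (0, 240), (666, 666), (608, 0), (260, -260), (0, 608), (-666, -666), (240, 0), (-120, 120), (0, 272), (53, 53), (-104, 0), (-10, 10), (0, 8), (-1, -1)] [1, 2, 1, -2, 0, -1, -2, -1, -1, -2, -1, 0, 0]" using rZ zq[OF nz] by simp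
  have el: "deriv (\<lambda>u. deriv yfun u / deriv tfun u) s / deriv tfun s = rep ATL s (2) [(1, -1), (0, -14), (9, 9), (-336, 0), (-622, 622), (0, -1900), (-8334, -8334), (-11376, 0), (-43979, 43979), (0, 36170), (38989, 38989), (-169344, 0), (48440, -48440), (0, -512144), (219512, 219512), (-360192, 0), (-227342, 227342), (0, 2147012), (1309570, 1309570), (2009952, 0), (-287668, 287668), (0, -1241096), (-287668, -287668), (-2009952, 0), (1309570, -1309570), (0, 2147012), (-227342, -227342), (360192, 0), (219512, -219512), (0, -512144), (48440, 48440), (169344, 0), (38989, -38989), (0, 36170), (-43979, -43979), (11376, 0), (-8334, 8334), (0, -1900), (-622, -622), (336, 0), (9, -9), (0, -14), (1, 1)] [0, 1, 0, -3, 0, -2, -3, -2, -2, -3, -2, 0, 0] / rep ATL s (1 / 16) [(1, 0)] [-3, -4, -4, 0, 0, 1, 2, 2, 2, 2, 1, 0, 0]"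
    using dZ dT[OF nz] rZ1 rT1 by simp
  have c1: "pz (padd (padd (psc (1, 0) (pmul [(-1, -1)] (amonl ATL [0, 0, 0, 0, 1, 1, 1, 2, 0, 0, 0, 0, 0]))) (psc (-8, 0) (pmul [(1, 0)] (amonl ATL [1, 1, 2, 1, 0, 0, 0, 0, 0, 0, 0, 0, 0])))) (pneg (psc (1, 0) (pmul [(-1, -1)] (amonl ATL [0, 0, 0, 0, 0, 0, 0, 0, 2, 1, 1, 1, 0])))))" by code_simp
  have f1: "rep ATL s (1 / 8) [(-1, -1)] [-1, -1, -2, -1, 1, 1, 1, 2, 0, 0, 0, 0, 0] - 1 = rep ATL s (1 / 8) [(-1, -1)] [-1, -1, -2, -1, 0, 0, 0, 0, 2, 1, 1, 1, 0]"
    by (rule sub_const[where zs = "[0, 0, 0, 0, 0, 0, 0, 0, 0, 0, 0, 0, 0]"], simp, rule rep_sub[where m = "[-1, -1, -2, -1, 0, 0, 0, 0, 0, 0, 0, 0, 0]" and K = "(1 / 8)", OF nz c1]) simp_all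
  have c2: "pz (padd (padd (psc (4, 0) (pmul [(-1, -1)] (amonl ATL [1, 2, 1, 0, 1, 0, 0, 0, 0, 0, 0, 0, 0]))) (psc (-1, 0) (pmul [(1, 0)] (amonl ATL [0, 0, 0, 1, 0, 1, 2, 1, 0, 0, 0, 0, 0])))) (pneg (psc (1, 0) (pmul [(-1, 0)] (amonl ATL [0, 0, 0, 0, 0, 0, 0, 0, 2, 1, 1, 0, 1])))))" by code_simp
  have f2: "rep ATL s (1 / 8) [(-1, -1)] [-1, -1, -2, -1, 1, 1, 1, 2, 0, 0, 0, 0, 0] - rep ATL s (1 / 32) [(1, 0)] [-2, -3, -3, 0, 0, 2, 3, 3, 0, 0, 0, 0, 0] = rep ATL s (1 / 32) [(-1, 0)] [-2, -3, -3, -1, 0, 1, 1, 2, 2, 1, 1, 0, 1]"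
    by (rule rep_sub[where m = "[-2, -3, -3, -1, 0, 1, 1, 2, 0, 0, 0, 0, 0]" and K = "(1 / 32)", OF nz c2]) simp_all
  have c3: "pz (padd (padd (psc (1, 0) (pmul [(1, 0)] (amonl ATL [0, 0, 0, 0, 0, 2, 3, 3, 0, 0, 0, 0, 0]))) (psc (-32, 0) (pmul [(1, 0)] (amonl ATL [2, 3, 3, 0, 0, 0, 0, 0, 0, 0, 0, 0, 0])))) (pneg (psc (1, 0) (pmul [(1, 0)] (amonl ATL [0, 0, 0, 0, 0, 0, 0, 0, 3, 3, 2, 0, 0])))))" by code_simp
  have f3: "rep ATL s (1 / 32) [(1, 0)] [-2, -3, -3, 0, 0, 2, 3, 3, 0, 0, 0, 0, 0] - 1 = rep ATL s (1 / 32) [(1, 0)] [-2, -3, -3, 0, 0, 0, 0, 0, 3, 3, 2, 0, 0]"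
    by (rule sub_const[where zs = "[0, 0, 0, 0, 0, 0, 0, 0, 0, 0, 0, 0, 0]"], simp, rule rep_sub[where m = "[-2, -3, -3, 0, 0, 0, 0, 0, 0, 0, 0, 0, 0]" and K = "(1 / 32)", OF nz c3]) simp_all
  have f4: "1 / rep ATL s (1 / 8) [(-1, -1)] [-1, -1, -2, -1, 1, 1, 1, 2, 0, 0, 0, 0, 0] = rep ATL s (4) [(-1, 1)] [1, 1, 2, 1, -1, -1, -1, -2, 0, 0, 0, 0, 0]"
    by (rule rep_inv[OF nz, where n = "2"]) (simp_all add: negv_def algebra_simps)
  have f5: "1 / rep ATL s (1 / 8) [(-1, -1)] [-1, -1, -2, -1, 0, 0, 0, 0, 2, 1, 1, 1, 0] = rep ATL s (4) [(-1, 1)] [1, 1, 2, 1, 0, 0, 0, 0, -2, -1, -1, -1, 0]"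
    by (rule rep_inv[OF nz, where n = "2"]) (simp_all add: negv_def algebra_simps)
  have f6: "1 / rep ATL s (1 / 32) [(-1, 0)] [-2, -3, -3, -1, 0, 1, 1, 2, 2, 1, 1, 0, 1] = rep ATL s (32) [(-1, 0)] [2, 3, 3, 1, 0, -1, -1, -2, -2, -1, -1, 0, -1]"
    by (rule rep_inv[OF nz, where n = "1"]) (simp_all add: negv_def algebra_simps)
  have c7: "pz (padd (padd (psc (4, 0) (pmul [(-1, 1)] (amonl ATL [0, 0, 0, 0, 0, 0, 0, 0, 2, 1, 1, 1, 0]))) (psc (4, 0) (pmul [(-1, 1)] (amonl ATL [0, 0, 0, 0, 1, 1, 1, 2, 0, 0, 0, 0, 0])))) (pneg (psc (8, 0) (pmul [(-1, -1), (-2, 0), (-3, 3), (0, -32), (-41, -41), (22, 0), (77, -77), (0, 128), (77, 77), (-22, 0), (-41, 41), (0, -32), (-3, -3), (2, 0), (-1, 1)] (amonl ATL [0, 0, 0, 0, 0, 0, 0, 0, 0, 0, 0, 0, 0])))))" by code_simp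
  have f7: "rep ATL s (4) [(-1, 1)] [1, 1, 2, 1, -1, -1, -1, -2, 0, 0, 0, 0, 0] + rep ATL s (4) [(-1, 1)] [1, 1, 2, 1, 0, 0, 0, 0, -2, -1, -1, -1, 0] = rep ATL s (8) [(-1, -1), (-2, 0), (-3, 3), (0, -32), (-41, -41), (22, 0), (77, -77), (0, 128), (77, 77), (-22, 0), (-41, 41), (0, -32), (-3, -3), (2, 0), (-1, 1)] [1, 1, 2, 1, -1, -1, -1, -2, -2, -1, -1, -1, 0]"
    by (rule rep_add[where m = "[1, 1, 2, 1, -1, -1, -1, -2, -2, -1, -1, -1, 0]" and K = "(1)", OF nz c7]) simp_all
  have c8: "pz (padd (padd (psc (8, 0) (pmul [(-1, -1), (-2, 0), (-3, 3), (0, -32), (-41, -41), (22, 0), (77, -77), (0, 128), (77, 77), (-22, 0), (-41, 41), (0, -32), (-3, -3), (2, 0), (-1, 1)] (amonl ATL [0, 0, 0, 0, 0, 0, 0, 0, 0, 0, 0, 0, 1]))) (psc (32, 0) (pmul [(-1, 0)] (amonl ATL [1, 2, 1, 0, 1, 0, 0, 0, 0, 0, 0, 1, 0])))) (pneg (psc (8, 0) (pmul [(1, -1), (0, 8), (0, 0), (104, 0), (-53, 53), (0, 272), (0, 0), (-240, 0), (666, -666), (0, 608), (0, 0), (-608, 0), (-666, 666), (0, 240), (0, 0), (-272, 0), (53, -53), (0, -104), (0, 0), (-8, 0), (-1, 1)] (amonl ATL [0, 0, 0, 0, 0, 0, 0, 0, 0, 0, 0, 0, 0])))))" by code_simp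
  have f8: "rep ATL s (8) [(-1, -1), (-2, 0), (-3, 3), (0, -32), (-41, -41), (22, 0), (77, -77), (0, 128), (77, 77), (-22, 0), (-41, 41), (0, -32), (-3, -3), (2, 0), (-1, 1)] [1, 1, 2, 1, -1, -1, -1, -2, -2, -1, -1, -1, 0] + rep ATL s (32) [(-1, 0)] [2, 3, 3, 1, 0, -1, -1, -2, -2, -1, -1, 0, -1] = rep ATL s (8) [(1, -1), (0, 8), (0, 0), (104, 0), (-53, 53), (0, 272), (0, 0), (-240, 0), (666, -666), (0, 608), (0, 0), (-608, 0), (-666, 666), (0, 240), (0, 0), (-272, 0), (53, -53), (0, -104), (0, 0), (-8, 0), (-1, 1)] [1, 1, 2, 1, -1, -1, -1, -2, -2, -1, -1, -1, -1]"
    by (rule rep_add[where m = "[1, 1, 2, 1, -1, -1, -1, -2, -2, -1, -1, -1, -1]" and K = "(1)", OF nz c8]) simp_all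
  have f9: "(1 / 2) * rep ATL s (8) [(1, -1), (0, 8), (0, 0), (104, 0), (-53, 53), (0, 272), (0, 0), (-240, 0), (666, -666), (0, 608), (0, 0), (-608, 0), (-666, 666), (0, 240), (0, 0), (-272, 0), (53, -53), (0, -104), (0, 0), (-8, 0), (-1, 1)] [1, 1, 2, 1, -1, -1, -1, -2, -2, -1, -1, -1, -1] = rep ATL s (4) [(1, -1), (0, 8), (0, 0), (104, 0), (-53, 53), (0, 272), (0, 0), (-240, 0), (666, -666), (0, 608), (0, 0), (-608, 0), (-666, 666), (0, 240), (0, 0), (-272, 0), (53, -53), (0, -104), (0, 0), (-8, 0), (-1, 1)] [1, 1, 2, 1, -1, -1, -1, -2, -2, -1, -1, -1, -1]"
    by (rule rep_cmul) simp
  have c10: "pz (padd (pmul [(1, 1), (8, 0), (-10, 10), (0, -104), (-53, -53), (272, 0), (-120, 120), (0, 240), (666, 666), (608, 0), (260, -260), (0, 608), (-666, -666), (240, 0), (-120, 120), (0, 272), (53, 53), (-104, 0), (-10, 10), (0, 8), (-1, -1)] [(1, 1), (8, 0), (-10, 10), (0, -104), (-53, -53), (272, 0), (-120, 120), (0, 240), (666, 666), (608, 0), (260, -260), (0, 608), (-666, -666), (240, 0), (-120, 120), (0, 272), (53, 53), (-104, 0), (-10, 10), (0, 8), (-1, -1)]) (pneg (psc (2, 0) [(0, 1), (8, 8), (12, 0), (24, -24), (0, -1038), (888, 888), (-2412, 0), (-9432, 9432), (0, -24627), (1600, 1600), (66736, 0), (44736, -44736), (0, -74216), (81920, 81920),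 (27408, 0), (-202752, 202752), (0, 862770), (210576, 210576), (649448, 0), (-127568, 127568), (0, -477204), (-127568, -127568), (-649448, 0), (210576, -210576), (0, 862770), (-202752, -202752), (-27408, 0), (81920, -81920), (0, -74216), (44736, 44736), (-66736, 0), (1600, -1600), (0, -24627), (-9432, -9432), (2412, 0), (888, -888), (0, -1038), (24, 24), (-12, 0), (8, -8), (0, 1)])))" by code_simp
  have f10: "rep ATL s (2) [(1, 1), (8, 0), (-10, 10), (0, -104), (-53, -53), (272, 0), (-120, 120), (0, 240), (666, 666), (608, 0), (260, -260), (0, 608), (-666, -666), (240, 0), (-120, 120), (0, 272), (53, 53), (-104, 0), (-10, 10), (0, 8), (-1, -1)] [1, 2, 1, -2, 0, -1, -2, -1, -1, -2, -1, 0, 0] * rep ATL s (2) [(1, 1), (8, 0), (-10, 10), (0, -104), (-53, -53), (272, 0), (-120, 120), (0, 240), (666, 666), (608, 0), (260, -260), (0, 608), (-666, -666), (240, 0), (-120, 120), (0, 272), (53, 53), (-104, 0), (-10, 10), (0, 8), (-1, -1)] [1, 2, 1, -2, 0, -1, -2, -1, -1, -2, -1, 0, 0] = rep ATL s (8) [(0, 1), (8, 8), (12, 0), (24, -24), (0, -1038), (888, 888), (-2412, 0), (-9432, 9432), (0, -24627), (1600, 1600), (66736, 0), (44736, -44736), (0, -74216), (81920, 81920), (27408, 0), (-202752, 202752), (0, 862770), (210576, 210576), (649448, 0), (-127568, 127568), (0, -477204), (-127568, -127568), (-649448, 0), (210576, -210576), (0, 862770), (-202752, -202752), (-27408, 0),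 (81920, -81920), (0, -74216), (44736, 44736), (-66736, 0), (1600, -1600), (0, -24627), (-9432, -9432), (2412, 0), (888, -888), (0, -1038), (24, 24), (-12, 0), (8, -8), (0, 1)] [2, 4, 2, -4, 0, -2, -4, -2, -2, -4, -2, 0, 0]"
    by (rule rep_mul[OF nz c10]) simp_all
  have f11: "rep ATL s (2) [(1, 1), (8, 0), (-10, 10), (0, -104), (-53, -53), (272, 0), (-120, 120), (0, 240), (666, 666), (608, 0), (260, -260), (0, 608), (-666, -666), (240, 0), (-120, 120), (0, 272), (53, 53), (-104, 0), (-10, 10), (0, 8), (-1, -1)] [1, 2, 1, -2, 0, -1, -2, -1, -1, -2, -1, 0, 0] ^ 2 = rep ATL s (8) [(0, 1), (8, 8), (12, 0), (24, -24), (0, -1038), (888, 888), (-2412, 0), (-9432, 9432), (0, -24627), (1600, 1600), (66736, 0), (44736, -44736), (0, -74216), (81920, 81920), (27408, 0), (-202752, 202752), (0, 862770), (210576, 210576), (649448, 0), (-127568, 127568), (0, -477204), (-127568, -127568), (-649448, 0), (210576, -210576), (0, 862770), (-202752, -202752), (-27408, 0), (81920, -81920), (0, -74216), (44736, 44736), (-66736, 0), (1600, -1600), (0, -24627), (-9432, -9432), (2412, 0), (888, -888), (0, -1038), (24, 24), (-12, 0), (8, -8), (0, 1)] [2, 4, 2, -4, 0, -2, -4, -2, -2, -4, -2, 0, 0]"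
    by (rule pow2_via[OF f10])
  have c12: "pz (padd (pmul [(1, -1), (0, 8), (0, 0), (104, 0), (-53, 53), (0, 272), (0, 0), (-240, 0), (666, -666), (0, 608), (0, 0), (-608, 0), (-666, 666), (0, 240), (0, 0), (-272, 0), (53, -53), (0, -104), (0, 0), (-8, 0), (-1, 1)] [(0, 1), (8, 8), (12, 0), (24, -24), (0, -1038), (888, 888), (-2412, 0), (-9432, 9432), (0, -24627), (1600, 1600), (66736, 0), (44736, -44736), (0, -74216), (81920, 81920), (27408, 0), (-202752, 202752), (0, 862770), (210576, 210576), (649448, 0), (-127568, 127568), (0, -477204), (-127568, -127568), (-649448, 0), (210576, -210576), (0, 862770), (-202752, -202752), (-27408, 0), (81920, -81920), (0, -74216), (44736, 44736), (-66736, 0), (1600, -1600), (0, -24627), (-9432, -9432), (2412, 0), (888, -888), (0, -1038), (24, 24), (-12, 0), (8, -8), (0, 1)]) (pneg (psc (1, 0) [(1, 1), (8, 0), (-52, 52), (0, 152), (-67, -67), (10208, 0), (-9832, 9832), (0, -102816), (52557, 52557), (144744, 0), (-1043324, 1043324), (0, -3548808), (-1705567, -1705567), (16601664, 0), (145264, -145264), (0, 33473600), (1496877, 1496877), (9490920, 0), (-5996628, 5996628), (0, 82050488), (-109496375, -109496375), (-74380640, 0), (-156986392, 156986392), (0, 316232480), (390258553, 390258553), (-459968952, 0), (504704004, -504704004), (0, -165039464), (-1155870003, -1155870003), (-828705408, 0), (-681626080, 681626080), (0, -828705408), (1155870003, 1155870003), (-165039464, 0), (504704004, -504704004), (0, -459968952),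 (-390258553, -390258553), (316232480, 0), (-156986392, 156986392), (0, -74380640), (109496375, 109496375), (82050488, 0), (-5996628, 5996628), (0, 9490920), (-1496877, -1496877), (33473600, 0), (145264, -145264), (0, 16601664), (1705567, 1705567), (-3548808, 0), (-1043324, 1043324), (0, 144744), (-52557, -52557), (-102816, 0), (-9832, 9832), (0, 10208), (67, 67), (152, 0), (-52, 52), (0, 8), (-1, -1)])))" by code_simp
  have f12: "rep ATL s (4) [(1, -1), (0, 8), (0, 0), (104, 0), (-53, 53), (0, 272), (0, 0), (-240, 0), (666, -666), (0, 608), (0, 0), (-608, 0), (-666, 666), (0, 240), (0, 0), (-272, 0), (53, -53), (0, -104), (0, 0), (-8, 0), (-1, 1)] [1, 1, 2, 1, -1, -1, -1, -2, -2, -1, -1, -1, -1] * rep ATL s (8) [(0, 1), (8, 8), (12, 0), (24, -24), (0, -1038), (888, 888), (-2412, 0), (-9432, 9432), (0, -24627), (1600, 1600), (66736, 0), (44736, -44736), (0, -74216), (81920, 81920), (27408, 0), (-202752, 202752), (0, 862770), (210576, 210576), (649448, 0), (-127568, 127568), (0, -477204), (-127568, -127568), (-649448, 0), (210576, -210576), (0, 862770), (-202752, -202752), (-27408, 0), (81920, -81920), (0, -74216), (44736, 44736), (-66736, 0), (1600, -1600), (0, -24627), (-9432, -9432), (2412, 0), (888, -888), (0, -1038), (24, 24), (-12, 0), (8, -8), (0, 1)] [2, 4, 2, -4, 0, -2, -4, -2, -2, -4, -2, 0, 0] = rep ATL s (32) [(1, 1), (8, 0), (-52, 52), (0, 152),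 (-67, -67), (10208, 0), (-9832, 9832), (0, -102816), (52557, 52557), (144744, 0), (-1043324, 1043324), (0, -3548808), (-1705567, -1705567), (16601664, 0), (145264, -145264), (0, 33473600), (1496877, 1496877), (9490920, 0), (-5996628, 5996628), (0, 82050488), (-109496375, -109496375), (-74380640, 0), (-156986392, 156986392), (0, 316232480), (390258553, 390258553), (-459968952, 0), (504704004, -504704004), (0, -165039464), (-1155870003, -1155870003), (-828705408, 0), (-681626080, 681626080), (0, -828705408), (1155870003, 1155870003), (-165039464, 0), (504704004, -504704004), (0, -459968952), (-390258553, -390258553), (316232480, 0), (-156986392, 156986392), (0, -74380640), (109496375, 109496375), (82050488, 0), (-5996628, 5996628), (0, 9490920), (-1496877, -1496877), (33473600, 0), (145264, -145264), (0, 16601664), (1705567, 1705567), (-3548808, 0), (-1043324, 1043324), (0, 144744), (-52557, -52557), (-102816, 0), (-9832, 9832), (0, 10208), (67, 67), (152, 0), (-52, 52), (0, 8), (-1, -1)] [3, 5, 4, -3, -1, -3, -5, -4, -4, -5, -3, -1, -1]"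
    by (rule rep_mul[OF nz c12]) simp_all
  have f13: "1 / rep ATL s (1 / 32) [(1, 0)] [-2, -3, -3, 0, 0, 2, 3, 3, 0, 0, 0, 0, 0] = rep ATL s (32) [(1, 0)] [2, 3, 3, 0, 0, -2, -3, -3, 0, 0, 0, 0, 0]"
    by (rule rep_inv[OF nz, where n = "1"]) (simp_all add: negv_def algebra_simps)
  have f14: "1 / rep ATL s (1 / 32) [(1, 0)] [-2, -3, -3, 0, 0, 0, 0, 0, 3, 3, 2, 0, 0] = rep ATL s (32) [(1, 0)] [2, 3, 3, 0, 0, 0, 0, 0, -3, -3, -2, 0, 0]"
    by (rule rep_inv[OF nz, where n = "1"]) (simp_all add: negv_def algebra_simps)
  have c15: "pz (padd (padd (psc (32, 0) (pmul [(1, 0)] (amonl ATL [0, 0, 0, 0, 0, 0, 0, 0, 3, 3, 2, 0, 0]))) (psc (32, 0) (pmul [(1, 0)] (amonl ATL [0, 0, 0, 0, 0, 2, 3, 3, 0, 0, 0, 0, 0])))) (pneg (psc (64, 0) (pmul [(1, 0), (0, 0), (0, 0), (0, 0), (76, 0), (0, 0), (0, 0), (0, 0), (-282, 0), (0, 0), (0, 0), (0, 0), (76, 0), (0, 0), (0, 0), (0, 0), (1, 0)] (amonl ATL [0, 0, 0, 0, 0, 0, 0, 0, 0, 0, 0, 0, 0])))))" by code_simp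
  have f15: "rep ATL s (32) [(1, 0)] [2, 3, 3, 0, 0, -2, -3, -3, 0, 0, 0, 0, 0] + rep ATL s (32) [(1, 0)] [2, 3, 3, 0, 0, 0, 0, 0, -3, -3, -2, 0, 0] = rep ATL s (64) [(1, 0), (0, 0), (0, 0), (0, 0), (76, 0), (0, 0), (0, 0), (0, 0), (-282, 0), (0, 0), (0, 0), (0, 0), (76, 0), (0, 0), (0, 0), (0, 0), (1, 0)] [2, 3, 3, 0, 0, -2, -3, -3, -3, -3, -2, 0, 0]"
    by (rule rep_add[where m = "[2, 3, 3, 0, 0, -2, -3, -3, -3, -3, -2, 0, 0]" and K = "(1)", OF nz c15]) simp_all
  have c16: "pz (padd (padd (psc (64, 0) (pmul [(1, 0), (0, 0), (0, 0), (0, 0), (76, 0), (0, 0), (0, 0), (0, 0), (-282, 0), (0, 0), (0, 0), (0, 0), (76, 0), (0, 0), (0, 0), (0, 0), (1, 0)] (amonl ATL [0, 0, 0, 0, 0, 0, 0, 0, 0, 0, 0, 0, 1]))) (psc (32, 0) (pmul [(-1, 0)] (amonl ATL [0, 0, 0, 1, 0, 1, 2, 1, 1, 2, 1, 0, 0])))) (pneg (psc (32, 0) (pmul [(0, 1), (-7, -7), (11, 0), (-20, 20), (0, 199), (-381, -381), (277, 0), (-176, 176), (0, -358), (922, 922), (-1154, 0), (1416, -1416), (0, -1154), (-922, -922), (-358, 0), (-176, 176), (0, 277), (381, 381), (199, 0), (-20, 20), (0, 11), (7, 7), (1, 0)] (amonl ATL [0, 0, 0, 0, 0, 0, 0, 0,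 0, 0, 0, 0, 0])))))" by code_simp
  have f16: "rep ATL s (64) [(1, 0), (0, 0), (0, 0), (0, 0), (76, 0), (0, 0), (0, 0), (0, 0), (-282, 0), (0, 0), (0, 0), (0, 0), (76, 0), (0, 0), (0, 0), (0, 0), (1, 0)] [2, 3, 3, 0, 0, -2, -3, -3, -3, -3, -2, 0, 0] + rep ATL s (32) [(-1, 0)] [2, 3, 3, 1, 0, -1, -1, -2, -2, -1, -1, 0, -1] = rep ATL s (32) [(0, 1), (-7, -7), (11, 0), (-20, 20), (0, 199), (-381, -381), (277, 0), (-176, 176), (0, -358), (922, 922), (-1154, 0), (1416, -1416), (0, -1154), (-922, -922), (-358, 0), (-176, 176), (0, 277), (381, 381), (199, 0), (-20, 20), (0, 11), (7, 7), (1, 0)] [2, 3, 3, 0, 0, -2, -3, -3, -3, -3, -2, 0, -1]"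
    by (rule rep_add[where m = "[2, 3, 3, 0, 0, -2, -3, -3, -3, -3, -2, 0, -1]" and K = "(1)", OF nz c16]) simp_all
  have c17: "pz (padd (pmul [(0, 1), (-7, -7), (11, 0), (-20, 20), (0, 199), (-381, -381), (277, 0), (-176, 176), (0, -358), (922, 922), (-1154, 0), (1416, -1416), (0, -1154), (-922, -922), (-358, 0), (-176, 176), (0, 277), (381, 381), (199, 0), (-20, 20), (0, 11), (7, 7), (1, 0)] [(1, 1), (8, 0), (-10, 10), (0, -104), (-53, -53), (272, 0), (-120, 120), (0, 240), (666, 666), (608, 0), (260, -260), (0, 608), (-666, -666), (240, 0), (-120, 120), (0, 272), (53, 53), (-104, 0), (-10, 10), (0, 8), (-1, -1)]) (pneg (psc (1, 0) [(-1, 1), (0, -6), (-55, -55), (292, 0), (-1144, 1144), (0, 300), (-5288, -5288), (36732, 0), (-38643, 38643), (0, 50290), (-115557, -115557), (51408, 0), (-25648, 25648), (0, -393456), (152496, 152496), (-1058576, 0), (710550, -710550), (0, 1706388), (-446726, -446726), (2658936, 0), (818592, -818592), (0, -4824184), (818592, 818592), (-2658936, 0), (-446726, 446726), (0, 1706388), (710550, 710550), (1058576, 0), (152496, -152496), (0, -393456), (-25648, -25648), (-51408, 0), (-115557, 115557), (0, 50290), (-38643, -38643), (-36732, 0), (-5288, 5288), (0, 300), (-1144, -1144), (-292, 0), (-55, 55), (0, -6), (-1, -1)])))" by code_simp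
  have f17: "rep ATL s (32) [(0, 1), (-7, -7), (11, 0), (-20, 20), (0, 199), (-381, -381), (277, 0), (-176, 176), (0, -358), (922, 922), (-1154, 0), (1416, -1416), (0, -1154), (-922, -922), (-358, 0), (-176, 176), (0, 277), (381, 381), (199, 0), (-20, 20), (0, 11), (7, 7), (1, 0)] [2, 3, 3, 0, 0, -2, -3, -3, -3, -3, -2, 0, -1] * rep ATL s (2) [(1, 1), (8, 0), (-10, 10), (0, -104), (-53, -53), (272, 0), (-120, 120), (0, 240), (666, 666), (608, 0), (260, -260), (0, 608), (-666, -666), (240, 0), (-120, 120), (0, 272), (53, 53), (-104, 0), (-10, 10), (0, 8), (-1, -1)] [1, 2, 1, -2, 0, -1, -2, -1, -1, -2, -1, 0, 0] = rep ATL s (64) [(-1, 1), (0, -6), (-55, -55), (292, 0), (-1144, 1144), (0, 300), (-5288, -5288), (36732, 0), (-38643, 38643), (0, 50290), (-115557, -115557), (51408, 0), (-25648, 25648), (0, -393456), (152496, 152496), (-1058576, 0), (710550, -710550), (0, 1706388), (-446726, -446726), (2658936, 0), (818592, -818592), (0, -4824184), (818592, 818592), (-2658936, 0), (-446726, 446726), (0, 1706388), (710550, 710550), (1058576, 0), (152496, -152496), (0, -393456), (-25648, -25648), (-51408, 0), (-115557, 115557), (0, 50290), (-38643, -38643), (-36732, 0), (-5288, 5288), (0, 300), (-1144, -1144), (-292, 0), (-55, 55), (0, -6), (-1, -1)] [3, 5, 4, -2, 0, -3, -5, -4, -4, -5, -3, 0, -1]"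
    by (rule rep_mul[OF nz c17]) simp_all
  have c18: "pz (padd (padd (psc (32, 0) (pmul [(1, 1), (8, 0), (-52, 52), (0, 152), (-67, -67), (10208, 0), (-9832, 9832), (0, -102816), (52557, 52557), (144744, 0), (-1043324, 1043324), (0, -3548808), (-1705567, -1705567), (16601664, 0), (145264, -145264), (0, 33473600), (1496877, 1496877), (9490920, 0), (-5996628, 5996628), (0, 82050488), (-109496375, -109496375), (-74380640, 0), (-156986392, 156986392), (0, 316232480), (390258553, 390258553), (-459968952, 0), (504704004, -504704004), (0, -165039464), (-1155870003, -1155870003), (-828705408, 0), (-681626080, 681626080), (0, -828705408), (1155870003, 1155870003), (-165039464, 0), (504704004, -504704004), (0, -459968952), (-390258553, -390258553), (316232480, 0), (-156986392, 156986392), (0, -74380640), (109496375, 109496375), (82050488, 0), (-5996628, 5996628), (0, 9490920), (-1496877, -1496877), (33473600, 0), (145264, -145264), (0, 16601664), (1705567, 1705567), (-3548808, 0), (-1043324, 1043324), (0, 144744), (-52557, -52557), (-102816, 0), (-9832, 9832), (0, 10208), (67, 67), (152, 0), (-52, 52), (0, 8), (-1, -1)] (amonl ATL [0, 0, 0, 0, 0, 0, 0, 0, 0, 0, 0, 0, 0]))) (psc (-64, 0) (pmul [(-1, 1), (0, -6), (-55, -55), (292, 0), (-1144, 1144), (0, 300), (-5288, -5288), (36732, 0), (-38643, 38643), (0, 50290), (-115557, -115557), (51408, 0), (-25648, 25648), (0, -393456), (152496, 152496), (-1058576, 0), (710550, -710550), (0, 1706388), (-446726, -446726), (2658936, 0),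 (818592, -818592), (0, -4824184), (818592, 818592), (-2658936, 0), (-446726, 446726), (0, 1706388), (710550, 710550), (1058576, 0), (152496, -152496), (0, -393456), (-25648, -25648), (-51408, 0), (-115557, 115557), (0, 50290), (-38643, -38643), (-36732, 0), (-5288, 5288), (0, 300), (-1144, -1144), (-292, 0), (-55, 55), (0, -6), (-1, -1)] (amonl ATL [0, 0, 0, 1, 1, 0, 0, 0, 0, 0, 0, 1, 0])))) (pneg (psc (32, 0) (pmul [(-1, -1), (8, 0), (64, -64), (0, 56), (-2757, -2757), (-4352, 0), (-9856, 9856), (0, 86272), (74139, 74139), (-476024, 0), (518848, -518848), (0, 1651256), (2692975, 2692975), (-6155776, 0), (-11026688, 11026688), (0, 1459712), (-70272957, -70272957), (-2892632, 0), (72187456, -72187456), (0, -59804264), (85265247, 85265247), (65640192, 0), (165142144, -165142144), (0, 137857280), (120557759, 120557759), (441084840, 0), (-72706368, 72706368), (0, 157307672), (1289507475, 1289507475), (337987584, 0), (-308211200, 308211200), (0, 337987584), (-1289507475, -1289507475), (157307672, 0), (-72706368, 72706368), (0, 441084840), (-120557759, -120557759), (137857280, 0), (165142144, -165142144), (0, 65640192), (-85265247, -85265247), (-59804264, 0), (72187456, -72187456), (0, -2892632), (70272957, 70272957), (1459712, 0), (-11026688, 11026688), (0, -6155776), (-2692975, -2692975), (1651256, 0), (518848, -518848), (0, -476024), (-74139, -74139), (86272, 0), (-9856, 9856), (0, -4352), (2757, 2757), (56, 0), (64, -64), (0, 8), (1, 1)] (amonl ATL [0, 0, 0, 0, 0,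 0, 0, 0, 0, 0, 0, 0, 0])))))" by code_simp
  have f18: "rep ATL s (32) [(1, 1), (8, 0), (-52, 52), (0, 152), (-67, -67), (10208, 0), (-9832, 9832), (0, -102816), (52557, 52557), (144744, 0), (-1043324, 1043324), (0, -3548808), (-1705567, -1705567), (16601664, 0), (145264, -145264), (0, 33473600), (1496877, 1496877), (9490920, 0), (-5996628, 5996628), (0, 82050488), (-109496375, -109496375), (-74380640, 0), (-156986392, 156986392), (0, 316232480), (390258553, 390258553), (-459968952, 0), (504704004, -504704004), (0, -165039464), (-1155870003, -1155870003), (-828705408, 0), (-681626080, 681626080), (0, -828705408), (1155870003, 1155870003), (-165039464, 0), (504704004, -504704004), (0, -459968952), (-390258553, -390258553), (316232480, 0), (-156986392, 156986392), (0, -74380640), (109496375, 109496375), (82050488, 0), (-5996628, 5996628), (0, 9490920), (-1496877, -1496877), (33473600, 0), (145264, -145264), (0, 16601664), (1705567, 1705567), (-3548808, 0), (-1043324, 1043324), (0, 144744), (-52557, -52557), (-102816, 0), (-9832, 9832), (0, 10208), (67, 67), (152, 0), (-52, 52), (0, 8), (-1, -1)] [3, 5, 4, -3, -1, -3, -5, -4, -4, -5, -3, -1, -1] - rep ATL s (64) [(-1, 1), (0, -6), (-55, -55), (292, 0), (-1144, 1144), (0, 300), (-5288, -5288), (36732, 0), (-38643, 38643), (0, 50290), (-115557, -115557), (51408, 0), (-25648, 25648), (0, -393456), (152496, 152496), (-1058576, 0), (710550, -710550), (0, 1706388), (-446726, -446726), (2658936, 0), (818592, -818592), (0, -4824184),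 (818592, 818592), (-2658936, 0), (-446726, 446726), (0, 1706388), (710550, 710550), (1058576, 0), (152496, -152496), (0, -393456), (-25648, -25648), (-51408, 0), (-115557, 115557), (0, 50290), (-38643, -38643), (-36732, 0), (-5288, 5288), (0, 300), (-1144, -1144), (-292, 0), (-55, 55), (0, -6), (-1, -1)] [3, 5, 4, -2, 0, -3, -5, -4, -4, -5, -3, 0, -1] = rep ATL s (32) [(-1, -1), (8, 0), (64, -64), (0, 56), (-2757, -2757), (-4352, 0), (-9856, 9856), (0, 86272), (74139, 74139), (-476024, 0), (518848, -518848), (0, 1651256), (2692975, 2692975), (-6155776, 0), (-11026688, 11026688), (0, 1459712), (-70272957, -70272957), (-2892632, 0), (72187456, -72187456), (0, -59804264), (85265247, 85265247), (65640192, 0), (165142144, -165142144), (0, 137857280), (120557759, 120557759), (441084840, 0), (-72706368, 72706368), (0, 157307672), (1289507475, 1289507475), (337987584, 0), (-308211200, 308211200), (0, 337987584), (-1289507475, -1289507475), (157307672, 0), (-72706368, 72706368), (0, 441084840), (-120557759, -120557759), (137857280, 0), (165142144, -165142144), (0, 65640192), (-85265247, -85265247), (-59804264, 0), (72187456, -72187456), (0, -2892632), (70272957, 70272957), (1459712, 0), (-11026688, 11026688), (0, -6155776), (-2692975, -2692975), (1651256, 0), (518848, -518848), (0, -476024), (-74139, -74139), (86272, 0), (-9856, 9856), (0, -4352), (2757, 2757), (56, 0), (64, -64), (0, 8), (1, 1)] [3, 5, 4, -3, -1, -3, -5, -4, -4, -5, -3, -1, -1]"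
    by (rule rep_sub[where m = "[3, 5, 4, -3, -1, -3, -5, -4, -4, -5, -3, -1, -1]" and K = "(1)", OF nz c18]) simp_all
  have c19: "pz (padd (pmul [(-1, -1)] [(-1, -1)]) (pneg (psc (2, 0) [(0, 1)])))" by code_simp
  have f19: "rep ATL s (1 / 8) [(-1, -1)] [-1, -1, -2, -1, 1, 1, 1, 2, 0, 0, 0, 0, 0] * rep ATL s (1 / 8) [(-1, -1)] [-1, -1, -2, -1, 0, 0, 0, 0, 2, 1, 1, 1, 0] = rep ATL s (1 / 32) [(0, 1)] [-2, -2, -4, -2, 1, 1, 1, 2, 2, 1, 1, 1, 0]"
    by (rule rep_mul[OF nz c19]) simp_all
  have c20: "pz (padd (pmul [(0, 1)] [(-1, 0)]) (pneg (psc (1, 0) [(0, -1)])))" by code_simp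
  have f20: "rep ATL s (1 / 32) [(0, 1)] [-2, -2, -4, -2, 1, 1, 1, 2, 2, 1, 1, 1, 0] * rep ATL s (1 / 32) [(-1, 0)] [-2, -3, -3, -1, 0, 1, 1, 2, 2, 1, 1, 0, 1] = rep ATL s (1 / 1024) [(0, -1)] [-4, -5, -7, -3, 1, 2, 2, 4, 4, 2, 2, 1, 1]"
    by (rule rep_mul[OF nz c20]) simp_all
  have c21: "pz (padd (pmul [(1, 0)] [(1, 0)]) (pneg (psc (1, 0) [(1, 0)])))" by code_simp
  have f21: "rep ATL s (1 / 32) [(1, 0)] [-2, -3, -3, 0, 0, 2, 3, 3, 0, 0, 0, 0, 0] * rep ATL s (1 / 32) [(1, 0)] [-2, -3, -3, 0, 0, 2, 3, 3, 0, 0, 0, 0, 0] = rep ATL s (1 / 1024) [(1, 0)] [-4, -6, -6, 0, 0, 4, 6, 6, 0, 0, 0, 0, 0]"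
    by (rule rep_mul[OF nz c21]) simp_all
  have f22: "rep ATL s (1 / 32) [(1, 0)] [-2, -3, -3, 0, 0, 2, 3, 3, 0, 0, 0, 0, 0] ^ 2 = rep ATL s (1 / 1024) [(1, 0)] [-4, -6, -6, 0, 0, 4, 6, 6, 0, 0, 0, 0, 0]"
    by (rule pow2_via[OF f21])
  have c23: "pz (padd (pmul [(1, 0)] [(1, 0)]) (pneg (psc (1, 0) [(1, 0)])))" by code_simp
  have f23: "rep ATL s (1 / 32) [(1, 0)] [-2, -3, -3, 0, 0, 0, 0, 0, 3, 3, 2, 0, 0] * rep ATL s (1 / 32) [(1, 0)] [-2, -3, -3, 0, 0, 0, 0, 0, 3, 3, 2, 0, 0] = rep ATL s (1 / 1024) [(1, 0)] [-4, -6, -6, 0, 0, 0, 0, 0, 6, 6, 4, 0, 0]"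
    by (rule rep_mul[OF nz c23]) simp_all
  have f24: "rep ATL s (1 / 32) [(1, 0)] [-2, -3, -3, 0, 0, 0, 0, 0, 3, 3, 2, 0, 0] ^ 2 = rep ATL s (1 / 1024) [(1, 0)] [-4, -6, -6, 0, 0, 0, 0, 0, 6, 6, 4, 0, 0]"
    by (rule pow2_via[OF f23])
  have c25: "pz (padd (pmul [(1, 0)] [(1, 0)]) (pneg (psc (1, 0) [(1, 0)])))" by code_simp
  have f25: "rep ATL s (1 / 1024) [(1, 0)] [-4, -6, -6, 0, 0, 4, 6, 6, 0, 0, 0, 0, 0] * rep ATL s (1 / 1024) [(1, 0)] [-4, -6, -6, 0, 0, 0, 0, 0, 6, 6, 4, 0, 0] = rep ATL s (1 / 1048576) [(1, 0)] [-8, -12, -12, 0, 0, 4, 6, 6, 6, 6, 4, 0, 0]"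
    by (rule rep_mul[OF nz c25]) simp_all
  have f26: "1 / rep ATL s (1 / 1048576) [(1, 0)] [-8, -12, -12, 0, 0, 4, 6, 6, 6, 6, 4, 0, 0] = rep ATL s (1048576) [(1, 0)] [8, 12, 12, 0, 0, -4, -6, -6, -6, -6, -4, 0, 0]"
    by (rule rep_inv[OF nz, where n = "1"]) (simp_all add: negv_def algebra_simps)
  have c27: "pz (padd (pmul [(0, -1)] [(1, 0)]) (pneg (psc (1, 0) [(0, -1)])))" by code_simp
  have f27: "rep ATL s (1 / 1024) [(0, -1)] [-4, -5, -7, -3, 1, 2, 2, 4, 4, 2, 2, 1, 1] * rep ATL s (1048576) [(1, 0)] [8, 12, 12, 0, 0, -4, -6, -6, -6, -6, -4, 0, 0] = rep ATL s (1024) [(0, -1)] [4, 7, 5, -3, 1, -2, -4, -2, -2, -4, -2, 1, 1]"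
    by (rule rep_mul[OF nz c27]) simp_all
  have f28: "rep ATL s (1 / 1024) [(0, -1)] [-4, -5, -7, -3, 1, 2, 2, 4, 4, 2, 2, 1, 1] / rep ATL s (1 / 1048576) [(1, 0)] [-8, -12, -12, 0, 0, 4, 6, 6, 6, 6, 4, 0, 0] = rep ATL s (1024) [(0, -1)] [4, 7, 5, -3, 1, -2, -4, -2, -2, -4, -2, 1, 1]"
    by (rule div_via[OF f26 f27])
  have f29: "(- 9 / 128) * rep ATL s (1 / 32) [(1, 0)] [-2, -3, -3, 0, 0, 2, 3, 3, 0, 0, 0, 0, 0] = rep ATL s (- 9 / 4096) [(1, 0)] [-2, -3, -3, 0, 0, 2, 3, 3, 0, 0, 0, 0, 0]"
    by (rule rep_cmul) simp
  have c30: "pz (padd (pmul [(-1, -1)] [(-1, -1)]) (pneg (psc (2, 0) [(0, 1)])))" by code_simp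
  have f30: "rep ATL s (1 / 8) [(-1, -1)] [-1, -1, -2, -1, 1, 1, 1, 2, 0, 0, 0, 0, 0] * rep ATL s (1 / 8) [(-1, -1)] [-1, -1, -2, -1, 1, 1, 1, 2, 0, 0, 0, 0, 0] = rep ATL s (1 / 32) [(0, 1)] [-2, -2, -4, -2, 2, 2, 2, 4, 0, 0, 0, 0, 0]"
    by (rule rep_mul[OF nz c30]) simp_all
  have f31: "rep ATL s (1 / 8) [(-1, -1)] [-1, -1, -2, -1, 1, 1, 1, 2, 0, 0, 0, 0, 0] ^ 2 = rep ATL s (1 / 32) [(0, 1)] [-2, -2, -4, -2, 2, 2, 2, 4, 0, 0, 0, 0, 0]"
    by (rule pow2_via[OF f30])
  have f32: "1 / rep ATL s (1 / 32) [(0, 1)] [-2, -2, -4, -2, 2, 2, 2, 4, 0, 0, 0, 0, 0] = rep ATL s (32) [(0, -1)] [2, 2, 4, 2, -2, -2, -2, -4, 0, 0, 0, 0, 0]"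
    by (rule rep_inv[OF nz, where n = "1"]) (simp_all add: negv_def algebra_simps)
  have c33: "pz (padd (pmul [(1, 0)] [(0, -1)]) (pneg (psc (1, 0) [(0, -1)])))" by code_simp
  have f33: "rep ATL s (- 9 / 4096) [(1, 0)] [-2, -3, -3, 0, 0, 2, 3, 3, 0, 0, 0, 0, 0] * rep ATL s (32) [(0, -1)] [2, 2, 4, 2, -2, -2, -2, -4, 0, 0, 0, 0, 0] = rep ATL s (- 9 / 128) [(0, -1)] [0, -1, 1, 2, -2, 0, 1, -1, 0, 0, 0, 0, 0]"
    by (rule rep_mul[OF nz c33]) simp_all
  have f34: "rep ATL s (- 9 / 4096) [(1, 0)] [-2, -3, -3, 0, 0, 2, 3, 3, 0, 0, 0, 0, 0] / rep ATL s (1 / 32) [(0, 1)] [-2, -2, -4, -2, 2, 2, 2, 4, 0, 0, 0, 0, 0] = rep ATL s (- 9 / 128) [(0, -1)] [0, -1, 1, 2, -2, 0, 1, -1, 0, 0, 0, 0, 0]"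
    by (rule div_via[OF f32 f33])
  have f35: "(9 / 128) * rep ATL s (1 / 32) [(1, 0)] [-2, -3, -3, 0, 0, 0, 0, 0, 3, 3, 2, 0, 0] = rep ATL s (9 / 4096) [(1, 0)] [-2, -3, -3, 0, 0, 0, 0, 0, 3, 3, 2, 0, 0]"
    by (rule rep_cmul) simp
  have c36: "pz (padd (pmul [(-1, -1)] [(-1, -1)]) (pneg (psc (2, 0) [(0, 1)])))" by code_simp
  have f36: "rep ATL s (1 / 8) [(-1, -1)] [-1, -1, -2, -1, 0, 0, 0, 0, 2, 1, 1, 1, 0] * rep ATL s (1 / 8) [(-1, -1)] [-1, -1, -2, -1, 0, 0, 0, 0, 2, 1, 1, 1, 0] = rep ATL s (1 / 32) [(0, 1)] [-2, -2, -4, -2, 0, 0, 0, 0, 4, 2, 2, 2, 0]"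
    by (rule rep_mul[OF nz c36]) simp_all
  have f37: "rep ATL s (1 / 8) [(-1, -1)] [-1, -1, -2, -1, 0, 0, 0, 0, 2, 1, 1, 1, 0] ^ 2 = rep ATL s (1 / 32) [(0, 1)] [-2, -2, -4, -2, 0, 0, 0, 0, 4, 2, 2, 2, 0]"
    by (rule pow2_via[OF f36])
  have f38: "1 / rep ATL s (1 / 32) [(0, 1)] [-2, -2, -4, -2, 0, 0, 0, 0, 4, 2, 2, 2, 0] = rep ATL s (32) [(0, -1)] [2, 2, 4, 2, 0, 0, 0, 0, -4, -2, -2, -2, 0]"
    by (rule rep_inv[OF nz, where n = "1"]) (simp_all add: negv_def algebra_simps)
  have c39: "pz (padd (pmul [(1, 0)] [(0, -1)]) (pneg (psc (1, 0) [(0, -1)])))" by code_simp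
  have f39: "rep ATL s (9 / 4096) [(1, 0)] [-2, -3, -3, 0, 0, 0, 0, 0, 3, 3, 2, 0, 0] * rep ATL s (32) [(0, -1)] [2, 2, 4, 2, 0, 0, 0, 0, -4, -2, -2, -2, 0] = rep ATL s (9 / 128) [(0, -1)] [0, -1, 1, 2, 0, 0, 0, 0, -1, 1, 0, -2, 0]"
    by (rule rep_mul[OF nz c39]) simp_all
  have f40: "rep ATL s (9 / 4096) [(1, 0)] [-2, -3, -3, 0, 0, 0, 0, 0, 3, 3, 2, 0, 0] / rep ATL s (1 / 32) [(0, 1)] [-2, -2, -4, -2, 0, 0, 0, 0, 4, 2, 2, 2, 0] = rep ATL s (9 / 128) [(0, -1)] [0, -1, 1, 2, 0, 0, 0, 0, -1, 1, 0, -2, 0]"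
    by (rule div_via[OF f38 f39])
  have f41: "(55 / 128) * rep ATL s (1 / 32) [(1, 0)] [-2, -3, -3, 0, 0, 2, 3, 3, 0, 0, 0, 0, 0] = rep ATL s (55 / 4096) [(1, 0)] [-2, -3, -3, 0, 0, 2, 3, 3, 0, 0, 0, 0, 0]"
    by (rule rep_cmul) simp
  have c42: "pz (padd (pmul [(1, 0)] [(1, 0)]) (pneg (psc (1, 0) [(1, 0)])))" by code_simp
  have f42: "rep ATL s (55 / 4096) [(1, 0)] [-2, -3, -3, 0, 0, 2, 3, 3, 0, 0, 0, 0, 0] * rep ATL s (1 / 32) [(1, 0)] [-2, -3, -3, 0, 0, 0, 0, 0, 3, 3, 2, 0, 0] = rep ATL s (55 / 131072) [(1, 0)] [-4, -6, -6, 0, 0, 2, 3, 3, 3, 3, 2, 0, 0]"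
    by (rule rep_mul[OF nz c42]) simp_all
  have c43: "pz (padd (pmul [(-1, 0)] [(-1, 0)]) (pneg (psc (1, 0) [(1, 0)])))" by code_simp
  have f43: "rep ATL s (1 / 32) [(-1, 0)] [-2, -3, -3, -1, 0, 1, 1, 2, 2, 1, 1, 0, 1] * rep ATL s (1 / 32) [(-1, 0)] [-2, -3, -3, -1, 0, 1, 1, 2, 2, 1, 1, 0, 1] = rep ATL s (1 / 1024) [(1, 0)] [-4, -6, -6, -2, 0, 2, 2, 4, 4, 2, 2, 0, 2]"
    by (rule rep_mul[OF nz c43]) simp_all
  have f44: "rep ATL s (1 / 32) [(-1, 0)] [-2, -3, -3, -1, 0, 1, 1, 2, 2, 1, 1, 0, 1] ^ 2 = rep ATL s (1 / 1024) [(1, 0)] [-4, -6, -6, -2, 0, 2, 2, 4, 4, 2, 2, 0, 2]"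
    by (rule pow2_via[OF f43])
  have f45: "1 / rep ATL s (1 / 1024) [(1, 0)] [-4, -6, -6, -2, 0, 2, 2, 4, 4, 2, 2, 0, 2] = rep ATL s (1024) [(1, 0)] [4, 6, 6, 2, 0, -2, -2, -4, -4, -2, -2, 0, -2]"
    by (rule rep_inv[OF nz, where n = "1"]) (simp_all add: negv_def algebra_simps)
  have c46: "pz (padd (pmul [(1, 0)] [(1, 0)]) (pneg (psc (1, 0) [(1, 0)])))" by code_simp
  have f46: "rep ATL s (55 / 131072) [(1, 0)] [-4, -6, -6, 0, 0, 2, 3, 3, 3, 3, 2, 0, 0] * rep ATL s (1024) [(1, 0)] [4, 6, 6, 2, 0, -2, -2, -4, -4, -2, -2, 0, -2] = rep ATL s (55 / 128) [(1, 0)] [0, 0, 0, 2, 0, 0, 1, -1, -1, 1, 0, 0, -2]"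
    by (rule rep_mul[OF nz c46]) simp_all
  have f47: "rep ATL s (55 / 131072) [(1, 0)] [-4, -6, -6, 0, 0, 2, 3, 3, 3, 3, 2, 0, 0] / rep ATL s (1 / 1024) [(1, 0)] [-4, -6, -6, -2, 0, 2, 2, 4, 4, 2, 2, 0, 2] = rep ATL s (55 / 128) [(1, 0)] [0, 0, 0, 2, 0, 0, 1, -1, -1, 1, 0, 0, -2]"
    by (rule div_via[OF f45 f46])
  have c48: "pz (padd (padd (psc (9, 0) (pmul [(1, 0)] (amonl ATL [0, 1, 0, 0, 2, 0, 0, 1, 0, 0, 0, 0, 0]))) (psc (-9, 0) (pmul [(0, -1)] (amonl ATL [0, 0, 1, 2, 0, 0, 1, 0, 0, 0, 0, 0, 0])))) (pneg (psc (9, 0) (pmul [(1, 1), (0, 0), (8, 8), (0, 0), (-2, -2), (0, 0), (8, 8), (0, 0), (1, 1)] (amonl ATL [0, 0, 0, 0, 0, 0, 0, 0, 2, 1, 1, 0, 0])))))" by code_simp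
  have f48: "(9 / 128) + rep ATL s (- 9 / 128) [(0, -1)] [0, -1, 1, 2, -2, 0, 1, -1, 0, 0, 0, 0, 0] = rep ATL s (9 / 128) [(1, 1), (0, 0), (8, 8), (0, 0), (-2, -2), (0, 0), (8, 8), (0, 0), (1, 1)] [0, -1, 0, 0, -2, 0, 0, -1, 2, 1, 1, 0, 0]"
    by (rule const_add[where zs = "[0, 0, 0, 0, 0, 0, 0, 0, 0, 0, 0, 0, 0]"], simp, rule rep_add[where m = "[0, -1, 0, 0, -2, 0, 0, -1, 0, 0, 0, 0, 0]" and K = "(1 / 128)", OF nz c48]) simp_all
  have c49: "pz (padd (padd (psc (9, 0) (pmul [(1, 1), (0, 0), (8, 8), (0, 0), (-2, -2), (0, 0), (8, 8), (0, 0), (1, 1)] (amonl ATL [0, 0, 0, 0, 0, 0, 0, 0, 3, 0, 1, 2, 0]))) (psc (9, 0) (pmul [(0, -1)] (amonl ATL [0, 0, 1, 2, 2, 0, 0, 1, 0, 0, 0, 0, 0])))) (pneg (psc (9, 0) (pmul [(1, 0), (-4, 4), (0, 88), (284, 284), (746, 0), (116, -116), (0, 2120), (1812, 1812), (-2225, 0), (-3624, 3624), (0, -4752), (-5608, -5608), (7052, 0), (5608, -5608), (0, 4752), (3624, 3624), (-2225, 0), (-1812, 1812), (0, -2120), (-116, -116), (746, 0), (-284, 284), (0, -88), (4, 4), (1, 0)] (amonl ATL [0, 1, 0, 0, 0, 0, 1, 0, 0, 0, 0, 0, 0])))))" by code_simp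
  have f49: "rep ATL s (9 / 128) [(1, 1), (0, 0), (8, 8), (0, 0), (-2, -2), (0, 0), (8, 8), (0, 0), (1, 1)] [0, -1, 0, 0, -2, 0, 0, -1, 2, 1, 1, 0, 0] + rep ATL s (9 / 128) [(0, -1)] [0, -1, 1, 2, 0, 0, 0, 0, -1, 1, 0, -2, 0] = rep ATL s (9 / 128) [(1, 0), (-4, 4), (0, 88), (284, 284), (746, 0), (116, -116), (0, 2120), (1812, 1812), (-2225, 0), (-3624, 3624), (0, -4752), (-5608, -5608), (7052, 0), (5608, -5608), (0, 4752), (3624, 3624), (-2225, 0), (-1812, 1812), (0, -2120), (-116, -116), (746, 0), (-284, 284), (0, -88), (4, 4), (1, 0)] [0, 0, 0, 0, -2, 0, 1, -1, -1, 1, 0, -2, 0]"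
    by (rule rep_add[where m = "[0, -1, 0, 0, -2, 0, 0, -1, -1, 1, 0, -2, 0]" and K = "(1 / 128)", OF nz c49]) simp_all
  have c50: "pz (padd (padd (psc (9, 0) (pmul [(1, 0), (-4, 4), (0, 88), (284, 284), (746, 0), (116, -116), (0, 2120), (1812, 1812), (-2225, 0), (-3624, 3624), (0, -4752), (-5608, -5608), (7052, 0), (5608, -5608), (0, 4752), (3624, 3624), (-2225, 0), (-1812, 1812), (0, -2120), (-116, -116), (746, 0), (-284, 284), (0, -88), (4, 4), (1, 0)] (amonl ATL [0, 0, 0, 0, 0, 0, 0, 0, 0, 0, 0, 0, 2]))) (psc (55, 0) (pmul [(1, 0)] (amonl ATL [0, 0, 0, 2, 2, 0, 0, 0, 0, 0, 0, 2, 0])))) (pneg (psc (16, 0) (pmul [(-4, 0), (-15, 15), (0, 156), (653, 653), (2796, 0), (3084, -3084), (0, -3488), (17316, 17316), (48504, 0), (3904, -3904), (0, 137616), (125640, 125640), (-62408, 0), (-371316, 371316), (0, 117408), (-545468, -545468), (-566352, 0), (241914, -241914), (0, -503384), (241914, 241914), (566352, 0), (-545468, 545468), (0, 117408), (-371316, -371316), (62408, 0), (125640, -125640), (0, 137616), (3904, 3904), (-48504, 0), (17316, -17316), (0, -3488), (3084, 3084), (-2796, 0), (653, -653), (0, 156), (-15, -15), (4, 0)] (amonl ATL [0, 0, 0, 0, 0, 0, 0, 0, 0, 0, 0, 0, 0])))))" by code_simp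
  have f50: "rep ATL s (9 / 128) [(1, 0), (-4, 4), (0, 88), (284, 284), (746, 0), (116, -116), (0, 2120), (1812, 1812), (-2225, 0), (-3624, 3624), (0, -4752), (-5608, -5608), (7052, 0), (5608, -5608), (0, 4752), (3624, 3624), (-2225, 0), (-1812, 1812), (0, -2120), (-116, -116), (746, 0), (-284, 284), (0, -88), (4, 4), (1, 0)] [0, 0, 0, 0, -2, 0, 1, -1, -1, 1, 0, -2, 0] + rep ATL s (55 / 128) [(1, 0)] [0, 0, 0, 2, 0, 0, 1, -1, -1, 1, 0, 0, -2] = rep ATL s (1 / 8) [(-4, 0), (-15, 15), (0, 156), (653, 653), (2796, 0), (3084, -3084), (0, -3488), (17316, 17316), (48504, 0), (3904, -3904), (0, 137616), (125640, 125640), (-62408, 0), (-371316, 371316), (0, 117408), (-545468, -545468), (-566352, 0), (241914, -241914), (0, -503384), (241914, 241914), (566352, 0), (-545468, 545468), (0, 117408), (-371316, -371316), (62408, 0), (125640, -125640), (0, 137616), (3904, 3904), (-48504, 0), (17316, -17316), (0, -3488), (3084, 3084), (-2796, 0), (653, -653), (0, 156), (-15, -15), (4, 0)] [0, 0, 0, 0, -2, 0, 1, -1, -1, 1, 0, -2, -2]"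
    by (rule rep_add[where m = "[0, 0, 0, 0, -2, 0, 1, -1, -1, 1, 0, -2, -2]" and K = "(1 / 128)", OF nz c50]) simp_all
  have c51: "pz (padd (pmul [(0, -1)] [(-4, 0), (-15, 15), (0, 156), (653, 653), (2796, 0), (3084, -3084), (0, -3488), (17316, 17316), (48504, 0), (3904, -3904), (0, 137616), (125640, 125640), (-62408, 0), (-371316, 371316), (0, 117408), (-545468, -545468), (-566352, 0), (241914, -241914), (0, -503384), (241914, 241914), (566352, 0), (-545468, 545468), (0, 117408), (-371316, -371316), (62408, 0), (125640, -125640), (0, 137616), (3904, 3904), (-48504, 0), (17316, -17316), (0, -3488), (3084, 3084), (-2796, 0), (653, -653), (0, 156), (-15, -15), (4, 0)]) (pneg (psc (1, 0) [(0, 4), (15, 15), (156, 0), (653, -653), (0, -2796), (-3084, -3084), (-3488, 0), (17316, -17316), (0, -48504), (-3904, -3904), (137616, 0), (125640, -125640), (0, 62408), (371316, 371316), (117408, 0), (-545468, 545468), (0, 566352), (-241914, -241914), (-503384, 0), (241914, -241914), (0, -566352), (545468, 545468), (117408, 0), (-371316, 371316), (0, -62408), (-125640, -125640), (137616, 0), (3904, -3904), (0, 48504), (-17316, -17316), (-3488, 0), (3084, -3084), (0, 2796), (-653, -653), (156, 0), (-15, 15), (0, -4)])))" by code_simp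
  have f51: "rep ATL s (1024) [(0, -1)] [4, 7, 5, -3, 1, -2, -4, -2, -2, -4, -2, 1, 1] * rep ATL s (1 / 8) [(-4, 0), (-15, 15), (0, 156), (653, 653), (2796, 0), (3084, -3084), (0, -3488), (17316, 17316), (48504, 0), (3904, -3904), (0, 137616), (125640, 125640), (-62408, 0), (-371316, 371316), (0, 117408), (-545468, -545468), (-566352, 0), (241914, -241914), (0, -503384), (241914, 241914), (566352, 0), (-545468, 545468), (0, 117408), (-371316, -371316), (62408, 0), (125640, -125640), (0, 137616), (3904, 3904), (-48504, 0), (17316, -17316), (0, -3488), (3084, 3084), (-2796, 0), (653, -653), (0, 156), (-15, -15), (4, 0)] [0, 0, 0, 0, -2, 0, 1, -1, -1, 1, 0, -2, -2] = rep ATL s (128) [(0, 4), (15, 15), (156, 0), (653, -653), (0, -2796), (-3084, -3084), (-3488, 0), (17316, -17316), (0, -48504), (-3904, -3904), (137616, 0), (125640, -125640), (0, 62408), (371316, 371316), (117408, 0), (-545468, 545468), (0, 566352), (-241914, -241914), (-503384, 0), (241914, -241914), (0, -566352), (545468, 545468), (117408, 0), (-371316, 371316), (0, -62408), (-125640, -125640), (137616, 0), (3904, -3904), (0, 48504), (-17316, -17316), (-3488, 0), (3084, -3084), (0, 2796), (-653, -653), (156, 0), (-15, 15), (0, -4)] [4, 7, 5, -3, -1, -2, -3, -3, -3, -3, -2, -1, -1]"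
    by (rule rep_mul[OF nz c51]) simp_all
  have c52: "pz (padd (padd (psc (32, 0) (pmul [(-1, -1), (8, 0), (64, -64), (0, 56), (-2757, -2757), (-4352, 0), (-9856, 9856), (0, 86272), (74139, 74139), (-476024, 0), (518848, -518848), (0, 1651256), (2692975, 2692975), (-6155776, 0), (-11026688, 11026688), (0, 1459712), (-70272957, -70272957), (-2892632, 0), (72187456, -72187456), (0, -59804264), (85265247, 85265247), (65640192, 0), (165142144, -165142144), (0, 137857280), (120557759, 120557759), (441084840, 0), (-72706368, 72706368), (0, 157307672), (1289507475, 1289507475), (337987584, 0), (-308211200, 308211200), (0, 337987584), (-1289507475, -1289507475), (157307672, 0), (-72706368, 72706368), (0, 441084840), (-120557759, -120557759), (137857280, 0), (165142144, -165142144), (0, 65640192), (-85265247, -85265247), (-59804264, 0), (72187456, -72187456), (0, -2892632), (70272957, 70272957), (1459712, 0), (-11026688, 11026688), (0, -6155776), (-2692975, -2692975), (1651256, 0), (518848, -518848), (0, -476024), (-74139, -74139), (86272, 0), (-9856, 9856), (0, -4352), (2757, 2757), (56, 0), (64, -64), (0, 8), (1, 1)] (amonl ATL [0, 0, 0, 0, 0, 0, 0, 0, 0, 0, 0, 0, 0]))) (psc (128, 0) (pmul [(0, 4), (15, 15), (156, 0), (653, -653), (0, -2796), (-3084, -3084), (-3488, 0), (17316, -17316), (0, -48504), (-3904, -3904), (137616, 0), (125640, -125640), (0, 62408), (371316, 371316), (117408, 0), (-545468, 545468), (0, 566352), (-241914, -241914), (-503384, 0), (241914, -241914), (0, -566352),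 (545468, 545468), (117408, 0), (-371316, 371316), (0, -62408), (-125640, -125640), (137616, 0), (3904, -3904), (0, 48504), (-17316, -17316), (-3488, 0), (3084, -3084), (0, 2796), (-653, -653), (156, 0), (-15, 15), (0, -4)] (amonl ATL [1, 2, 1, 0, 0, 1, 2, 1, 1, 2, 1, 0, 0])))) (pneg (psc (32, 0) (pmul [(1, -1), (0, -14), (9, 9), (-336, 0), (-622, 622), (0, -1900), (-8334, -8334), (-11376, 0), (-43979, 43979), (0, 36170), (38989, 38989), (-169344, 0), (48440, -48440), (0, -512144), (219512, 219512), (-360192, 0), (-227342, 227342), (0, 2147012), (1309570, 1309570), (2009952, 0), (-287668, 287668), (0, -1241096), (-287668, -287668), (-2009952, 0), (1309570, -1309570), (0, 2147012), (-227342, -227342), (360192, 0), (219512, -219512), (0, -512144), (48440, 48440), (169344, 0), (38989, -38989), (0, 36170), (-43979, -43979), (11376, 0), (-8334, 8334), (0, -1900), (-622, -622), (336, 0), (9, -9), (0, -14), (1, 1)] (amonl ATL [0, 0, 0, 0, 1, 0, 0, 0, 0, 0, 0, 1, 1])))))" by code_simp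
  have f52: "rep ATL s (32) [(-1, -1), (8, 0), (64, -64), (0, 56), (-2757, -2757), (-4352, 0), (-9856, 9856), (0, 86272), (74139, 74139), (-476024, 0), (518848, -518848), (0, 1651256), (2692975, 2692975), (-6155776, 0), (-11026688, 11026688), (0, 1459712), (-70272957, -70272957), (-2892632, 0), (72187456, -72187456), (0, -59804264), (85265247, 85265247), (65640192, 0), (165142144, -165142144), (0, 137857280), (120557759, 120557759), (441084840, 0), (-72706368, 72706368), (0, 157307672), (1289507475, 1289507475), (337987584, 0), (-308211200, 308211200), (0, 337987584), (-1289507475, -1289507475), (157307672, 0), (-72706368, 72706368), (0, 441084840), (-120557759, -120557759), (137857280, 0), (165142144, -165142144), (0, 65640192), (-85265247, -85265247), (-59804264, 0), (72187456, -72187456), (0, -2892632), (70272957, 70272957), (1459712, 0), (-11026688, 11026688), (0, -6155776), (-2692975, -2692975), (1651256, 0), (518848, -518848), (0, -476024), (-74139, -74139), (86272, 0), (-9856, 9856), (0, -4352), (2757, 2757), (56, 0), (64, -64), (0, 8), (1, 1)] [3, 5, 4, -3, -1, -3, -5, -4, -4, -5, -3, -1, -1] + rep ATL s (128) [(0, 4), (15, 15), (156, 0), (653, -653), (0, -2796), (-3084, -3084), (-3488, 0), (17316, -17316), (0, -48504), (-3904, -3904), (137616, 0), (125640, -125640), (0, 62408), (371316, 371316), (117408, 0), (-545468, 545468), (0, 566352), (-241914, -241914), (-503384, 0), (241914, -241914), (0, -566352), (545468, 545468), (117408, 0), (-371316, 371316), (0, -62408), (-125640, -125640), (137616, 0),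 (3904, -3904), (0, 48504), (-17316, -17316), (-3488, 0), (3084, -3084), (0, 2796), (-653, -653), (156, 0), (-15, 15), (0, -4)] [4, 7, 5, -3, -1, -2, -3, -3, -3, -3, -2, -1, -1] = rep ATL s (32) [(1, -1), (0, -14), (9, 9), (-336, 0), (-622, 622), (0, -1900), (-8334, -8334), (-11376, 0), (-43979, 43979), (0, 36170), (38989, 38989), (-169344, 0), (48440, -48440), (0, -512144), (219512, 219512), (-360192, 0), (-227342, 227342), (0, 2147012), (1309570, 1309570), (2009952, 0), (-287668, 287668), (0, -1241096), (-287668, -287668), (-2009952, 0), (1309570, -1309570), (0, 2147012), (-227342, -227342), (360192, 0), (219512, -219512), (0, -512144), (48440, 48440), (169344, 0), (38989, -38989), (0, 36170), (-43979, -43979), (11376, 0), (-8334, 8334), (0, -1900), (-622, -622), (336, 0), (9, -9), (0, -14), (1, 1)] [3, 5, 4, -3, 0, -3, -5, -4, -4, -5, -3, 0, 0]"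
    by (rule rep_add[where m = "[3, 5, 4, -3, -1, -3, -5, -4, -4, -5, -3, -1, -1]" and K = "(1)", OF nz c52]) simp_all
  have f53: "1 / rep ATL s (1 / 16) [(1, 0)] [-3, -4, -4, 0, 0, 1, 2, 2, 2, 2, 1, 0, 0] = rep ATL s (16) [(1, 0)] [3, 4, 4, 0, 0, -1, -2, -2, -2, -2, -1, 0, 0]"
    by (rule rep_inv[OF nz, where n = "1"]) (simp_all add: negv_def algebra_simps)
  have c54: "pz (padd (pmul [(1, -1), (0, -14), (9, 9), (-336, 0), (-622, 622), (0, -1900), (-8334, -8334), (-11376, 0), (-43979, 43979), (0, 36170), (38989, 38989), (-169344, 0), (48440, -48440), (0, -512144), (219512, 219512), (-360192, 0), (-227342, 227342), (0, 2147012), (1309570, 1309570), (2009952, 0), (-287668, 287668), (0, -1241096), (-287668, -287668), (-2009952, 0), (1309570, -1309570), (0, 2147012), (-227342, -227342), (360192, 0), (219512, -219512), (0, -512144), (48440, 48440), (169344, 0), (38989, -38989), (0, 36170), (-43979, -43979), (11376, 0), (-8334, 8334), (0, -1900), (-622, -622), (336, 0), (9, -9), (0, -14), (1, 1)] [(1, 0)]) (pneg (psc (1, 0) [(1, -1), (0, -14), (9, 9), (-336, 0), (-622, 622), (0, -1900), (-8334, -8334), (-11376, 0), (-43979, 43979), (0, 36170), (38989, 38989), (-169344, 0), (48440, -48440), (0, -512144), (219512, 219512), (-360192, 0), (-227342, 227342), (0, 2147012), (1309570, 1309570), (2009952, 0), (-287668, 287668), (0, -1241096), (-287668, -287668), (-2009952,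 0), (1309570, -1309570), (0, 2147012), (-227342, -227342), (360192, 0), (219512, -219512), (0, -512144), (48440, 48440), (169344, 0), (38989, -38989), (0, 36170), (-43979, -43979), (11376, 0), (-8334, 8334), (0, -1900), (-622, -622), (336, 0), (9, -9), (0, -14), (1, 1)])))" by code_simp
  have f54: "rep ATL s (2) [(1, -1), (0, -14), (9, 9), (-336, 0), (-622, 622), (0, -1900), (-8334, -8334), (-11376, 0), (-43979, 43979), (0, 36170), (38989, 38989), (-169344, 0), (48440, -48440), (0, -512144), (219512, 219512), (-360192, 0), (-227342, 227342), (0, 2147012), (1309570, 1309570), (2009952, 0), (-287668, 287668), (0, -1241096), (-287668, -287668), (-2009952, 0), (1309570, -1309570), (0, 2147012), (-227342, -227342), (360192, 0), (219512, -219512), (0, -512144), (48440, 48440), (169344, 0), (38989, -38989), (0, 36170), (-43979, -43979), (11376, 0), (-8334, 8334), (0, -1900), (-622, -622), (336, 0), (9, -9), (0, -14), (1, 1)] [0, 1, 0, -3, 0, -2, -3, -2, -2, -3, -2, 0, 0] * rep ATL s (16) [(1, 0)] [3, 4, 4, 0, 0, -1, -2, -2, -2, -2, -1, 0, 0] = rep ATL s (32) [(1, -1), (0, -14), (9, 9), (-336, 0), (-622, 622), (0, -1900), (-8334, -8334), (-11376, 0), (-43979, 43979), (0, 36170), (38989, 38989), (-169344, 0), (48440, -48440), (0, -512144), (219512, 219512), (-360192, 0), (-227342, 227342), (0, 2147012), (1309570, 1309570), (2009952, 0), (-287668, 287668), (0, -1241096), (-287668, -287668), (-2009952, 0), (1309570,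 -1309570), (0, 2147012), (-227342, -227342), (360192, 0), (219512, -219512), (0, -512144), (48440, 48440), (169344, 0), (38989, -38989), (0, 36170), (-43979, -43979), (11376, 0), (-8334, 8334), (0, -1900), (-622, -622), (336, 0), (9, -9), (0, -14), (1, 1)] [3, 5, 4, -3, 0, -3, -5, -4, -4, -5, -3, 0, 0]"
    by (rule rep_mul[OF nz c54]) simp_all
  have f55: "rep ATL s (2) [(1, -1), (0, -14), (9, 9), (-336, 0), (-622, 622), (0, -1900), (-8334, -8334), (-11376, 0), (-43979, 43979), (0, 36170), (38989, 38989), (-169344, 0), (48440, -48440), (0, -512144), (219512, 219512), (-360192, 0), (-227342, 227342), (0, 2147012), (1309570, 1309570), (2009952, 0), (-287668, 287668), (0, -1241096), (-287668, -287668), (-2009952, 0), (1309570, -1309570), (0, 2147012), (-227342, -227342), (360192, 0), (219512, -219512), (0, -512144), (48440, 48440), (169344, 0), (38989, -38989), (0, 36170), (-43979, -43979), (11376, 0), (-8334, 8334), (0, -1900), (-622, -622), (336, 0), (9, -9), (0, -14), (1, 1)] [0, 1, 0, -3, 0, -2, -3, -2, -2, -3, -2, 0, 0] / rep ATL s (1 / 16) [(1, 0)] [-3, -4, -4, 0, 0, 1, 2, 2, 2, 2, 1, 0, 0] = rep ATL s (32) [(1, -1), (0, -14), (9, 9), (-336, 0), (-622, 622), (0, -1900), (-8334, -8334), (-11376, 0), (-43979, 43979), (0, 36170), (38989, 38989), (-169344, 0), (48440, -48440), (0, -512144), (219512, 219512), (-360192, 0), (-227342, 227342), (0, 2147012),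 (1309570, 1309570), (2009952, 0), (-287668, 287668), (0, -1241096), (-287668, -287668), (-2009952, 0), (1309570, -1309570), (0, 2147012), (-227342, -227342), (360192, 0), (219512, -219512), (0, -512144), (48440, 48440), (169344, 0), (38989, -38989), (0, 36170), (-43979, -43979), (11376, 0), (-8334, 8334), (0, -1900), (-622, -622), (336, 0), (9, -9), (0, -14), (1, 1)] [3, 5, 4, -3, 0, -3, -5, -4, -4, -5, -3, 0, 0]"
    by (rule div_via[OF f53 f54])
  have fin: "PVI_rhs (3/8) (3/8) (3/8) (5/8) (rep ATL s (1 / 32) [(1, 0)] [-2, -3, -3, 0, 0, 2, 3, 3, 0, 0, 0, 0, 0]) (rep ATL s (1 / 8) [(-1, -1)] [-1, -1, -2, -1, 1, 1, 1, 2, 0, 0, 0, 0, 0]) (rep ATL s (2) [(1, 1), (8, 0), (-10, 10), (0, -104), (-53, -53), (272, 0), (-120, 120), (0, 240), (666, 666), (608, 0), (260, -260), (0, 608), (-666, -666), (240, 0), (-120, 120), (0, 272), (53, 53), (-104, 0), (-10, 10), (0, 8), (-1, -1)] [1, 2, 1, -2, 0, -1, -2, -1, -1, -2, -1, 0, 0]) = rep ATL s (32) [(1, -1), (0, -14), (9, 9), (-336, 0), (-622, 622), (0, -1900), (-8334, -8334), (-11376, 0), (-43979, 43979), (0, 36170), (38989, 38989), (-169344, 0), (48440, -48440), (0, -512144), (219512, 219512), (-360192, 0), (-227342, 227342), (0, 2147012), (1309570, 1309570), (2009952, 0), (-287668, 287668), (0, -1241096), (-287668, -287668), (-2009952, 0),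 (1309570, -1309570), (0, 2147012), (-227342, -227342), (360192, 0), (219512, -219512), (0, -512144), (48440, 48440), (169344, 0), (38989, -38989), (0, 36170), (-43979, -43979), (11376, 0), (-8334, 8334), (0, -1900), (-622, -622), (336, 0), (9, -9), (0, -14), (1, 1)] [3, 5, 4, -3, 0, -3, -5, -4, -4, -5, -3, 0, 0]"
    unfolding pvi_expand by (simp only: f1 f2 f3 f4 f5 f6 f7 f8 f9 f10 f11 f12 f13 f14 f15 f16 f17 f18 f19 f20 f21 f22 f23 f24 f25 f26 f27 f28 f29 f30 f31 f32 f33 f34 f35 f36 f37 f38 f39 f40 f41 f42 f43 f44 f45 f46 f47 f48 f49 f50 f51 f52)
  show ?thesis
    unfolding solves_PVI_at_def el ey et ez fin using f55 by simp
qed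

end
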